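(* Let \(P\in R\) be a singular vector for the Neveu–Schwarz action on \(R\), i.e. \(L_nP=0\) for all integers \(n>0\) and \(G_rP=0\) for all \(r\in\mathbb Z+\tfrac12\), \(r>0\). Then there are unique coefficients \(a_{\lambda,J}\in\mathbb C\), only finitely many nonzero, indexed by partitions \(\lambda\) and finite subsets \(J\subset\mathbb Z_{\ge0}\), such that \(P=\sum_{\lambda,J}a_{\lambda,J}\,\mathsf s_\lambda(p)\,q_J\). Consequently \(\Phi(P)=\sum_{\lambda,J}a_{\lambda,J}[\Sigma_\lambda]\otimes[\Sigma_J^{\mathrm{odd}}]\in H^*(\mathrm{Fred}_0\times\mathrm{Fred}_{\mathrm{sa}}^1;\mathbb C)\), and \(\Phi(P)\) is singular for the Neveu–Schwarz action on \(\mathcal F\).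
   Context: \(R=\mathbb C[p_1,p_2,\dots]\otimes\Lambda_{\mathbb C}(\widetilde p_0,\widetilde p_1,\dots)\). Let \(\beta=\sqrt2\). Operators on \(R\): for \(n>0\), \(a_{-n}=(-1)^{n-1}p_n/\beta\), \(a_n=(-1)^{n-1}\beta n\,\partial/\partial p_n\), \(a_0=0\); for \(m\ge0\), \(b_{-(m+1/2)}=(-1)^m\widetilde p_m\), \(b_{m+1/2}=(-1)^m\partial/\partial\widetilde p_m\) (left odd derivative). Then \(L_n=\tfrac12\sum_{m\in\mathbb Z}:a_ma_{n-m}:+\tfrac14\sum_{r\in\mathbb Z+1/2}(n-2r):b_rb_{n-r}:\) and \(G_r=\sum_{m\in\mathbb Z}a_mb_{r-m}\), where normal ordering moves modes of negative index to the left of modes of positive index (with the Koszul sign for odd modes). \(\mathcal F=H^*(\mathrm{Fred}_0\times\mathrm{Fred}_{\mathrm{sa}}^1;\mathbb C)=\mathbb C[x_1,x_2,\dots]\otimes\Lambda_{\mathbb C}(y_{1/2},y_{3/2},\dots)\), where \(x_n\) is the degree-\(2n\) component of the universal Chern character on \(\mathrm{Fred}_0\) (index-zero Fredholm operators) and \(y_{m+1/2}\) the degree-\((2m+1)\) component of the universal odd Chern character on \(\mathrm{Fred}_{\mathrm{sa}}^1\) (non-contractible component of self-adjoint Fredholm operators), with universal odd Chern class \(c_{m+1/2}=m!\,y_{m+1/2}\). On \(\mathcal F\) the same formulas for \(L_n,G_r\) are used with \(a_{-n}=(-1)^{n-1}n!x_n/\beta\), \(a_n=(-1)^{n-1}\frac{\beta}{(n-1)!}\partial/\partial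 x_n\), \(b_{-(m+1/2)}=(-1)^mm!\,y_{m+1/2}\), \(b_{m+1/2}=\frac{(-1)^m}{m!}\partial/\partial y_{m+1/2}\). \(\Phi:R\to\mathcal F\) is the graded-commutative algebra isomorphism with \(\Phi(p_n)=n!x_n\), \(\Phi(\widetilde p_m)=m!y_{m+1/2}\). Define \(e_m(p)\) by \(\sum_m e_m(p)t^m=\exp(\sum_{n\ge1}(-1)^{n-1}p_nt^n/n)\); for \(\lambda=(\lambda_1,\dots,\lambda_k)\), \(\mathsf s_\lambda(p)=\det(e_{\lambda_a+b-a}(p))_{1\le a,b\le k}\); for \(J=\{j_1<\dots<j_m\}\), \(q_J=\widetilde p_{j_1}\cdots\widetilde p_{j_m}\), \(q_\varnothing=1\). \([\Sigma_J^{\mathrm{odd}}]=c_{j_1+1/2}\cdots c_{j_m+1/2}\) (\(=1\) for \(J=\varnothing\)); \([\Sigma_\lambda]\in H^{2|\lambda|}(\mathrm{Fred}_0)\) is the generalized Koschorke class: \(\sigma_k^*\) (with \(\sigma_k(T)=L_kT\), \(L_k\) the backward \(k\)-shift on \(\ell^2(\mathbb N_0)\)) of the Cibotaru quasi-manifold class of the Schur–Koschorke locus \(\{T\in\mathrm{Fred}_k:\dim(\ker T\cap W_{\lambda_i+k-i})\ge i\}\) for the flag \(W_j=\overline{\mathrm{span}}\{e_j,e_{j+1},\dots\}\); it equals \(\det(c_{\lambda_a+b-a})\) in Chern classes normalized by \(c_i=c_i(-\mathrm{Ind})\). *)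

theory Defs
  imports "HOL-Library.Poly_Mapping" "HOL-Library.Groups_Big_Fun"
          "HOL-Computational_Algebra.Formal_Power_Series"
          "HOL-Combinatorics.Permutations"
begin

text \<open>Even part: C[v_1, v_2, ...] as finitely supported maps from exponent vectors
 (key n = exponent of the n-th even variable) to complex coefficients.\<close>
type_synonym epoly = "(nat \<Rightarrow>\<^sub>0 nat) \<Rightarrow>\<^sub>0 complex"

text \<open>An element of R = C[p_1,p_2,...] (x) Lambda(pt_0, pt_1, ...) is written uniquely as
 sum over finite S of P(S) * q_S, where q_S is the ordered product pt_{j1}...pt_{jm}, j1<...<jm,
 and P(S) is an even polynomial. The same model is used for F with x_n, y_{m+1/2}.\<close>
type_synonym spoly = "nat set \<Rightarrow> epoly"

definition wf_spoly :: "spoly \<Rightarrow> bool" where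
  "wf_spoly P \<longleftrightarrow> finite {S. P S \<noteq> 0} \<and> (\<forall>S. P S \<noteq> 0 \<longrightarrow> finite S)
     \<and> (\<forall>S. \<forall>e \<in> Poly_Mapping.keys (P S). Poly_Mapping.lookup e 0 = 0)"

definition cconst :: "complex \<Rightarrow> epoly" where
  "cconst c = Poly_Mapping.single 0 c"

definition evar :: "nat \<Rightarrow> epoly" where
  "evar n = Poly_Mapping.single (Poly_Mapping.single n 1) 1"

definition pderiv_e :: "nat \<Rightarrow> epoly \<Rightarrow> epoly" where
  "pderiv_e n f = (\<Sum>e\<in>Poly_Mapping.keys f. Poly_Mapping.single (e - Poly_Mapping.single n 1)
                     (Poly_Mapping.lookup f e * of_nat (Poly_Mapping.lookup e n)))"

definition scal :: "complex \<Rightarrow> spoly \<Rightarrow> spoly" where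
  "scal c P = (\<lambda>S. cconst c * P S)"

definition qsign :: "nat \<Rightarrow> nat set \<Rightarrow> complex" where
  "qsign m S = (-1) ^ card {j\<in>S. j < m}"

definition oddmul :: "nat \<Rightarrow> spoly \<Rightarrow> spoly" where
  "oddmul m P = (\<lambda>S. if m \<in> S then cconst (qsign m (S - {m})) * P (S - {m}) else 0)"

definition oddder :: "nat \<Rightarrow> spoly \<Rightarrow> spoly" where
  "oddder m P = (\<lambda>S. if m \<in> S then 0 else cconst (qsign m S) * P (insert m S))"

definition one_s :: spoly where
  "one_s = (\<lambda>S. if S = {} then 1 else 0)"

text \<open>Ordered product of odd generators: q_J = pt_{j1} pt_{j2} ... pt_{jm}, j1 < ... < jm,
 computed as iterated left multiplication (weight w j on generator j).\<close>
definition oddprod :: "(nat \<Rightarrow> complex) \<Rightarrow> nat set \<Rightarrow> spoly" where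
  "oddprod w J = foldr (\<lambda>j acc. scal (w j) (oddmul j acc)) (sorted_list_of_set J) one_s"

definition beta :: complex where "beta = complex_of_real (sqrt 2)"

definition halfint :: "rat set" where
  "halfint = {r. \<exists>k::int. r = of_int k + 1/2}"

definition amode :: "(nat \<Rightarrow> complex) \<Rightarrow> (nat \<Rightarrow> complex) \<Rightarrow> int \<Rightarrow> spoly \<Rightarrow> spoly" where
  "amode cc ca n P =
    (if n < 0 then (\<lambda>S. cconst (cc (nat (-n))) * (evar (nat (-n)) * P S))
     else if n > 0 then (\<lambda>S. cconst (ca (nat n)) * pderiv_e (nat n) (P S))
     else (\<lambda>S. 0))"

text \<open>Fermionic modes b_r, r in Z+1/2: b_{-(m+1/2)} = dc m * (left mult. by odd var m),
 b_{m+1/2} = dd m * (left odd derivative); b_r = 0 for r not a half-integer (never used).\<close>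
definition bmode :: "(nat \<Rightarrow> complex) \<Rightarrow> (nat \<Rightarrow> complex) \<Rightarrow> rat \<Rightarrow> spoly \<Rightarrow> spoly" where
  "bmode dc dd r P =
    (if r \<in> halfint \<and> r < 0 then scal (dc (nat \<lfloor>-r\<rfloor>)) (oddmul (nat \<lfloor>-r\<rfloor>) P)
     else if r \<in> halfint \<and> r > 0 then scal (dd (nat \<lfloor>r\<rfloor>)) (oddder (nat \<lfloor>r\<rfloor>) P)
     else (\<lambda>S. 0))"

definition nord_a :: "(int \<Rightarrow> spoly \<Rightarrow> spoly) \<Rightarrow> int \<Rightarrow> int \<Rightarrow> spoly \<Rightarrow> spoly" where
  "nord_a A m k P = (if m > 0 \<and> k < 0 then A k (A m P) else A m (A k P))"

definition nord_b :: "(rat \<Rightarrow> spoly \<Rightarrow> spoly) \<Rightarrow> rat \<Rightarrow> rat \<Rightarrow> spoly \<Rightarrow> spoly" where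
  "nord_b B r s P = (if r > 0 \<and> s < 0 then - B s (B r P) else B r (B s P))"

definition Lop :: "(int \<Rightarrow> spoly \<Rightarrow> spoly) \<Rightarrow> (rat \<Rightarrow> spoly \<Rightarrow> spoly) \<Rightarrow> int \<Rightarrow> spoly \<Rightarrow> spoly" where
  "Lop A B n P = (\<lambda>S.
      cconst (1/2) * Sum_any (\<lambda>m. nord_a A m (n - m) P S)
    + cconst (1/4) * Sum_any (\<lambda>r. (if r \<in> halfint then
          cconst (of_rat (of_int n - 2 * r)) * nord_b B r (of_int n - r) P S else 0)))"

definition Gop :: "(int \<Rightarrow> spoly \<Rightarrow> spoly) \<Rightarrow> (rat \<Rightarrow> spoly \<Rightarrow> spoly) \<Rightarrow> rat \<Rightarrow> spoly \<Rightarrow> spoly" where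
  "Gop A B r P = (\<lambda>S. Sum_any (\<lambda>m. A m (B (r - of_int m) P) S))"

definition NS_singular :: "(int \<Rightarrow> spoly \<Rightarrow> spoly) \<Rightarrow> (rat \<Rightarrow> spoly \<Rightarrow> spoly) \<Rightarrow> spoly \<Rightarrow> bool" where
  "NS_singular A B P \<longleftrightarrow> (\<forall>n::int. n > 0 \<longrightarrow> Lop A B n P = (\<lambda>S. 0))
      \<and> (\<forall>r. r \<in> halfint \<and> r > 0 \<longrightarrow> Gop A B r P = (\<lambda>S. 0))"

definition aR :: "int \<Rightarrow> spoly \<Rightarrow> spoly" where
  "aR = amode (\<lambda>n. (-1) ^ (n - 1) / beta) (\<lambda>n. (-1) ^ (n - 1) * beta * of_nat n)"
definition bR :: "rat \<Rightarrow> spoly \<Rightarrow> spoly" where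
  "bR = bmode (\<lambda>m. (-1) ^ m) (\<lambda>m. (-1) ^ m)"

definition aF :: "int \<Rightarrow> spoly \<Rightarrow> spoly" where
  "aF = amode (\<lambda>n. (-1) ^ (n - 1) * fact n / beta) (\<lambda>n. (-1) ^ (n - 1) * beta / fact (n - 1))"
definition bF :: "rat \<Rightarrow> spoly \<Rightarrow> spoly" where
  "bF = bmode (\<lambda>m. (-1) ^ m * fact m) (\<lambda>m. (-1) ^ m / fact m)"

text \<open>Graded-commutative algebra map with p_n |-> n! x_n, pt_m |-> m! y_{m+1/2},
 written out on the monomial basis p^e q_S.\<close>
definition Phi_even :: "epoly \<Rightarrow> epoly" where
  "Phi_even f = (\<Sum>e\<in>Poly_Mapping.keys f. Poly_Mapping.single e
       (Poly_Mapping.lookup f e * (\<Prod>n\<in>Poly_Mapping.keys e. (fact n) ^ Poly_Mapping.lookup e n)))"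

definition Phi :: "spoly \<Rightarrow> spoly" where
  "Phi P = (\<lambda>S. cconst (\<Prod>m\<in>S. fact m) * Phi_even (P S))"

text \<open>Coefficient of t^m in exp(X) = sum_k X^k / k!, X a power series with zero constant term
 (only k <= m contribute).\<close>
definition exp_coeff :: "epoly fps \<Rightarrow> nat \<Rightarrow> epoly" where
  "exp_coeff X m = (\<Sum>k\<le>m. cconst (1 / fact k) * fps_nth (X ^ k) m)"

definition esym :: "int \<Rightarrow> epoly" where
  "esym m = (if m < 0 then 0 else exp_coeff
     (Abs_fps (\<lambda>n. if n = 0 then 0 else cconst ((-1) ^ (n - 1) / of_nat n) * evar n)) (nat m))"

text \<open>Chern classes c_i (of -Ind) in terms of the Chern character components x_n:
 c(t) = exp(sum_n (-1)^(n-1) (n-1)! ch_n t^n).\<close>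
definition chern :: "int \<Rightarrow> epoly" where
  "chern m = (if m < 0 then 0 else exp_coeff
     (Abs_fps (\<lambda>n. if n = 0 then 0 else cconst ((-1) ^ (n - 1) * fact (n - 1)) * evar n)) (nat m))"

definition detm :: "nat \<Rightarrow> (nat \<Rightarrow> nat \<Rightarrow> epoly) \<Rightarrow> epoly" where
  "detm k M = (\<Sum>\<sigma> | \<sigma> permutes {..<k}. of_int (sign \<sigma>) * (\<Prod>a<k. M a (\<sigma> a)))"

definition is_partition :: "nat list \<Rightarrow> bool" where
  "is_partition l \<longleftrightarrow> sorted_wrt (\<ge>) l \<and> (\<forall>x\<in>set l. x > 0)"

text \<open>Jacobi--Trudi: s_lambda = det(e_{lambda_a + b - a}), 1-based indices a,b.\<close>
definition schur :: "nat list \<Rightarrow> epoly" where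
  "schur l = detm (length l) (\<lambda>a b. esym (int (l ! a) + int b - int a))"

definition koschorke :: "nat list \<Rightarrow> epoly" where
  "koschorke l = detm (length l) (\<lambda>a b. chern (int (l ! a) + int b - int a))"

definition schur_q :: "nat list \<Rightarrow> nat set \<Rightarrow> spoly" where
  "schur_q l J = (\<lambda>S. schur l * oddprod (\<lambda>_. 1) J S)"

text \<open>[Sigma_lambda] (x) [Sigma_J^odd] in F, with c_{j+1/2} = j! y_{j+1/2}.\<close>
definition class_F :: "nat list \<Rightarrow> nat set \<Rightarrow> spoly" where
  "class_F l J = (\<lambda>S. koschorke l * oddprod (\<lambda>j. fact j) J S)"

definition schur_expansion :: "(nat list \<Rightarrow> nat set \<Rightarrow> complex) \<Rightarrow> spoly \<Rightarrow> bool" where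
  "schur_expansion a P \<longleftrightarrow> finite {(l, J). a l J \<noteq> 0}
     \<and> (\<forall>l J. a l J \<noteq> 0 \<longrightarrow> is_partition l \<and> finite J)
     \<and> P = (\<lambda>S. Sum_any (\<lambda>(l, J). scal (a l J) (schur_q l J) S))"

end

theory Submission
  imports Defs "HOL-Library.Multiset_Order"
begin

lemma lookup_cconst_mult: "Poly_Mapping.lookup (cconst c * f) e = c * Poly_Mapping.lookup f e"
  unfolding cconst_def mult_map_scale_conv_mult[symmetric]
  by (simp add: Poly_Mapping.map.rep_eq when_def)

lemma cconst_mult: "cconst (a * b) = cconst a * cconst b"
  by (simp add: cconst_def mult_single)
lemma cconst_add: "cconst (a + b) = cconst a + cconst b"
  by (simp add: cconst_def single_add)
lemma cconst_0[simp]: "cconst 0 = 0" by (simp add: cconst_def)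
lemma cconst_1[simp]: "cconst 1 = 1" by (simp add: cconst_def)
lemma cconst_uminus: "cconst (- a) = - cconst a" by (simp add: cconst_def single_uminus)
lemma cconst_diff: "cconst (a - b) = cconst a - cconst b" by (simp add: cconst_def single_diff)

lemma pm_sum_singles: "f = (\<Sum>k\<in>Poly_Mapping.keys f. Poly_Mapping.single k (Poly_Mapping.lookup f k))"
proof (rule poly_mapping_eqI)
  fix e
  show "Poly_Mapping.lookup f e = Poly_Mapping.lookup (\<Sum>k\<in>Poly_Mapping.keys f. Poly_Mapping.single k (Poly_Mapping.lookup f k)) e"
    by (simp add: lookup_sum lookup_single when_def in_keys_iff)
qed

definition wtf :: "(nat \<Rightarrow>\<^sub>0 nat) \<Rightarrow> complex" where
  "wtf e = (\<Prod>n\<in>Poly_Mapping.keys e. (fact n) ^ Poly_Mapping.lookup e n)"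

lemma wtf_superset: "finite K \<Longrightarrow> Poly_Mapping.keys e \<subseteq> K \<Longrightarrow>
   wtf e = (\<Prod>n\<in>K. (fact n) ^ Poly_Mapping.lookup e n)"
  unfolding wtf_def
  by (rule prod.mono_neutral_left) (auto simp: in_keys_iff)

lemma wtf_add: "wtf (a + b) = wtf a * wtf b"
proof -
  let ?K = "Poly_Mapping.keys a \<union> Poly_Mapping.keys b"
  have "wtf (a + b) = (\<Prod>n\<in>?K. (fact n) ^ Poly_Mapping.lookup (a+b) n)"
    using keys_add[of a b] by (intro wtf_superset) auto
  also have "\<dots> = (\<Prod>n\<in>?K. (fact n) ^ Poly_Mapping.lookup a n) * (\<Prod>n\<in>?K. (fact n) ^ Poly_Mapping.lookup b n)"
    by (simp add: lookup_add power_add prod.distrib)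
  also have "\<dots> = wtf a * wtf b"
    by (subst (1 2) wtf_superset[symmetric]) auto
  finally show ?thesis .
qed

lemma wtf_nz: "wtf e \<noteq> 0"
  unfolding wtf_def by (simp add: prod_zero_iff)

lemma wtf_0[simp]: "wtf 0 = 1" by (simp add: wtf_def)

lemma wtf_single: "wtf (Poly_Mapping.single n 1) = fact n"
  by (simp add: wtf_def)

lemma lookup_Phi_even: "Poly_Mapping.lookup (Phi_even f) e = Poly_Mapping.lookup f e * wtf e"
  unfolding Phi_even_def wtf_def[symmetric]
  by (simp add: lookup_sum lookup_single when_def in_keys_iff)

lemma Phi_even_add: "Phi_even (f + g) = Phi_even f + Phi_even g"
  by (rule poly_mapping_eqI) (simp add: lookup_Phi_even lookup_add algebra_simps)
lemma Phi_even_0[simp]: "Phi_even 0 = 0"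
  by (rule poly_mapping_eqI) (simp add: lookup_Phi_even)
lemma Phi_even_uminus: "Phi_even (- f) = - Phi_even f"
  by (rule poly_mapping_eqI) (simp add: lookup_Phi_even)
lemma Phi_even_diff: "Phi_even (f - g) = Phi_even f - Phi_even g"
  by (rule poly_mapping_eqI) (simp add: lookup_Phi_even lookup_minus algebra_simps)
lemma Phi_even_sum: "Phi_even (sum g A) = (\<Sum>x\<in>A. Phi_even (g x))"
  by (induction A rule: infinite_finite_induct) (auto simp: Phi_even_add)
lemma Phi_even_cmult: "Phi_even (cconst c * f) = cconst c * Phi_even f"
  by (rule poly_mapping_eqI) (simp add: lookup_Phi_even lookup_cconst_mult)
lemma Phi_even_single: "Phi_even (Poly_Mapping.single k c) = Poly_Mapping.single k (c * wtf k)"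
  by (rule poly_mapping_eqI) (simp add: lookup_Phi_even lookup_single when_def)
lemma Phi_even_eq0: "Phi_even f = 0 \<longleftrightarrow> f = 0"
proof
  assume "Phi_even f = 0"
  then have "\<And>e. Poly_Mapping.lookup f e * wtf e = 0"
    by (metis lookup_Phi_even lookup_zero)
  then show "f = 0" by (intro poly_mapping_eqI) (simp add: wtf_nz)
qed simp

lemma Phi_even_mult: "Phi_even (f * g) = Phi_even f * Phi_even g"
proof -
  have single: "Phi_even (Poly_Mapping.single a c * Poly_Mapping.single b d)
     = Phi_even (Poly_Mapping.single a c) * Phi_even (Poly_Mapping.single b d)" for a b c d
    by (simp add: mult_single Phi_even_single wtf_add algebra_simps)
  have "Phi_even (f * g) = Phi_even ((\<Sum>k\<in>Poly_Mapping.keys f. Poly_Mapping.single k (Poly_Mapping.lookup f k))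
     * (\<Sum>k\<in>Poly_Mapping.keys g. Poly_Mapping.single k (Poly_Mapping.lookup g k)))"
    by (subst (1 2) pm_sum_singles) simp
  also have "\<dots> = Phi_even (\<Sum>k\<in>Poly_Mapping.keys f. Poly_Mapping.single k (Poly_Mapping.lookup f k))
     * Phi_even (\<Sum>k\<in>Poly_Mapping.keys g. Poly_Mapping.single k (Poly_Mapping.lookup g k))"
    by (simp add: sum_product Phi_even_sum single)
  also have "\<dots> = Phi_even f * Phi_even g"
    by (subst (3 4) pm_sum_singles) simp
  finally show ?thesis .
qed

lemma Phi_even_one[simp]: "Phi_even 1 = 1"
  by (rule poly_mapping_eqI) (simp add: lookup_Phi_even lookup_one when_def)
lemma Phi_even_cconst: "Phi_even (cconst c) = cconst c"
  using Phi_even_cmult[of c 1] by simp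
lemma Phi_even_evar: "Phi_even (evar n) = cconst (fact n) * evar n"
  using wtf_single[of n] by (simp add: evar_def Phi_even_single cconst_def mult_single)
lemma Phi_even_power: "Phi_even (f ^ k) = Phi_even f ^ k"
  by (induction k) (simp_all add: Phi_even_mult)
lemma Phi_even_prod: "Phi_even (prod g A) = (\<Prod>x\<in>A. Phi_even (g x))"
  by (induction A rule: infinite_finite_induct) (auto simp: Phi_even_mult)
lemma Phi_even_of_int: "Phi_even (of_int k) = of_int k"
proof -
  have "(of_int k :: epoly) = cconst (of_int k)"
    by (simp add: cconst_def)
  then show ?thesis by (simp add: Phi_even_cconst)
qed

lemma pm_minus_single_eq:
  fixes k e :: "nat \<Rightarrow>\<^sub>0 nat"
  assumes "Poly_Mapping.lookup k n \<noteq> 0"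
  shows "k - Poly_Mapping.single n 1 = e \<longleftrightarrow> k = e + Poly_Mapping.single n 1"
proof -
  have "(\<forall>i. Poly_Mapping.lookup k i - (if n = i then 1 else 0) = Poly_Mapping.lookup e i) \<longleftrightarrow>
        (\<forall>i. Poly_Mapping.lookup k i = Poly_Mapping.lookup e i + (if n = i then 1 else 0))"
  proof (intro iffI allI)
    fix i assume h: "\<forall>i. Poly_Mapping.lookup k i - (if n = i then 1 else 0) = Poly_Mapping.lookup e i"
    show "Poly_Mapping.lookup k i = Poly_Mapping.lookup e i + (if n = i then 1 else 0)"
      using h[rule_format, of i] assms by (cases "n = i") auto
  next
    fix i assume h: "\<forall>i. Poly_Mapping.lookup k i = Poly_Mapping.lookup e i + (if n = i then 1 else 0)"
    show "Poly_Mapping.lookup k i - (if n = i then 1 else 0) = Poly_Mapping.lookup e i"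
      using h[rule_format, of i] by (cases "n = i") auto
  qed
  moreover have "(k - Poly_Mapping.single n 1 = e) \<longleftrightarrow> (\<forall>i. Poly_Mapping.lookup k i - (if n = i then 1 else 0) = Poly_Mapping.lookup e i)"
    by (simp only: poly_mapping_eq_iff fun_eq_iff lookup_minus lookup_single when_def)
  moreover have "(k = e + Poly_Mapping.single n 1) \<longleftrightarrow> (\<forall>i. Poly_Mapping.lookup k i = Poly_Mapping.lookup e i + (if n = i then 1 else 0))"
    by (simp only: poly_mapping_eq_iff fun_eq_iff lookup_add lookup_single when_def)
  ultimately show ?thesis by simp
qed

lemma lookup_pderiv_e: "Poly_Mapping.lookup (pderiv_e n f) e =
   Poly_Mapping.lookup f (e + Poly_Mapping.single n 1) * of_nat (Poly_Mapping.lookup e n + 1)"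
proof -
  have "Poly_Mapping.lookup (pderiv_e n f) e = (\<Sum>k\<in>Poly_Mapping.keys f.
      (if k = e + Poly_Mapping.single n 1 then Poly_Mapping.lookup f k * of_nat (Poly_Mapping.lookup k n) else 0))"
    unfolding pderiv_e_def lookup_sum
  proof (rule sum.cong[OF refl])
    fix k
    show "Poly_Mapping.lookup (Poly_Mapping.single (k - Poly_Mapping.single n 1) (Poly_Mapping.lookup f k * of_nat (Poly_Mapping.lookup k n))) e
       = (if k = e + Poly_Mapping.single n 1 then Poly_Mapping.lookup f k * of_nat (Poly_Mapping.lookup k n) else 0)"
    proof (cases "Poly_Mapping.lookup k n = 0")
      case True
      then have "k \<noteq> e + Poly_Mapping.single n 1"
        by (auto simp: lookup_add)
      then show ?thesis using True by (simp add: lookup_single)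
    next
      case False
      then show ?thesis using pm_minus_single_eq[OF False, of e] by (auto simp: lookup_single when_def)
    qed
  qed
  also have "\<dots> = Poly_Mapping.lookup f (e + Poly_Mapping.single n 1) * of_nat (Poly_Mapping.lookup e n + 1)"
    by (simp add: in_keys_iff lookup_add)
  finally show ?thesis .
qed

lemma Phi_even_pderiv: "Phi_even (pderiv_e n f) = cconst (1 / fact n) * pderiv_e n (Phi_even f)"
  by (rule poly_mapping_eqI)
     (simp add: lookup_Phi_even lookup_cconst_mult lookup_pderiv_e wtf_add wtf_single[simplified])


definition fs :: "spoly \<Rightarrow> bool" where
  "fs Q \<longleftrightarrow> (\<forall>S. infinite S \<longrightarrow> Q S = 0)"

definition cS :: "nat set \<Rightarrow> complex" where
  "cS S = (\<Prod>m\<in>S. fact m)"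

lemma cS_nz: "cS S \<noteq> 0"
  unfolding cS_def by (induction S rule: infinite_finite_induct) auto

lemma cconst_eq0[simp]: "cconst c = 0 \<longleftrightarrow> c = 0"
  by (metis cconst_def lookup_single_eq single_zero)

lemma cconst_fact_inv[simp]: "cconst (fact m) * cconst (inverse (fact m)) = 1"
  by (simp flip: cconst_mult)

lemma Phi_apply: "Phi Q S = cconst (cS S) * Phi_even (Q S)"
  by (simp add: Phi_def cS_def)

lemma cconst_mult_eq0: "cconst c * f = 0 \<longleftrightarrow> c = 0 \<or> f = 0"
proof
  assume h: "cconst c * f = 0"
  show "c = 0 \<or> f = 0"
  proof (rule ccontr)
    assume "\<not> (c = 0 \<or> f = 0)"
    then obtain e where "Poly_Mapping.lookup f e \<noteq> 0" "c \<noteq> 0"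
      by (metis poly_mapping_eqI lookup_zero)
    then show False using h by (metis lookup_cconst_mult lookup_zero mult_eq_0_iff)
  qed
qed auto

lemma pderiv_e_cmult: "pderiv_e n (cconst c * f) = cconst c * pderiv_e n f"
  by (rule poly_mapping_eqI) (simp add: lookup_pderiv_e lookup_cconst_mult)

lemma pderiv_e_cmult': "pderiv_e n (f * cconst c) = cconst c * pderiv_e n f"
  using pderiv_e_cmult by (simp add: mult.commute)

lemma Sum_any_inj_hom:
  fixes h :: "'b::comm_monoid_add \<Rightarrow> 'c::comm_monoid_add"
  assumes add: "\<And>x y. h (x + y) = h x + h y" and z: "\<And>x. h x = 0 \<longleftrightarrow> x = 0"
  shows "h (Sum_any f) = Sum_any (\<lambda>m. h (f m))"
proof -
  have h0: "h 0 = 0" using z by simp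
  have supp: "{m. h (f m) \<noteq> 0} = {m. f m \<noteq> 0}" using z by auto
  have hs: "h (sum f A) = (\<Sum>m\<in>A. h (f m))" for A
    by (induction A rule: infinite_finite_induct) (auto simp: h0 add)
  show ?thesis
    unfolding Sum_any.expand_set supp hs ..
qed

lemma Phi_Sum_any: "cconst (cS S) * Phi_even (Sum_any f) = Sum_any (\<lambda>m. cconst (cS S) * Phi_even (f m))"
  by (rule Sum_any_inj_hom) (simp_all add: Phi_even_add distrib_left cconst_mult_eq0 cS_nz Phi_even_eq0)

lemma fs_amode: "fs Q \<Longrightarrow> fs (amode cc ca n Q)"
  by (simp add: fs_def amode_def pderiv_e_def)

lemma fs_bmode: "fs Q \<Longrightarrow> fs (bmode dc dd r Q)"
  by (auto simp: fs_def bmode_def scal_def oddmul_def oddder_def)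

lemma Phi_amode:
  assumes "fs Q" and cc: "\<And>k. k > 0 \<Longrightarrow> cc' k = cc k * fact k"
    and ca: "\<And>k. k > 0 \<Longrightarrow> ca' k = ca k / fact k"
  shows "Phi (amode cc ca n Q) = amode cc' ca' n (Phi Q)"
proof (rule ext)
  fix S
  consider "n < 0" | "n > 0" | "n = 0" by linarith
  then show "Phi (amode cc ca n Q) S = amode cc' ca' n (Phi Q) S"
  proof cases
    case 1
    then have k: "nat (-n) > 0" by simp
    show ?thesis using 1
      by (simp add: amode_def Phi_apply Phi_even_mult Phi_even_cconst Phi_even_evar cc[OF k] cconst_mult
           mult_ac)
  next
    case 2
    then have k: "nat n > 0" by simp
    show ?thesis using 2
      by (simp add: amode_def Phi_apply Phi_even_mult Phi_even_cconst Phi_even_pderiv ca[OF k] cconst_mult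
           pderiv_e_cmult pderiv_e_cmult' divide_inverse mult_ac)
  next
    case 3
    then show ?thesis by (simp add: amode_def Phi_apply)
  qed
qed

lemma cS_remove: "finite S \<Longrightarrow> m \<in> S \<Longrightarrow> cS S = fact m * cS (S - {m})"
  unfolding cS_def by (rule prod.remove)

lemma cS_insert: "finite S \<Longrightarrow> m \<notin> S \<Longrightarrow> cS (insert m S) = fact m * cS S"
  unfolding cS_def by simp

lemma Phi_bmode:
  assumes "fs Q" and dc: "\<And>k. dc' k = dc k * fact k"
    and dd: "\<And>k. dd' k = dd k / fact k"
  shows "Phi (bmode dc dd r Q) = bmode dc' dd' r (Phi Q)"
proof (rule ext)
  fix S
  consider "r \<in> halfint \<and> r < 0" | "r \<in> halfint \<and> r > 0" | "\<not> (r \<in> halfint \<and> r < 0) \<and> \<not> (r \<in> halfint \<and> r > 0)"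
    by blast
  then show "Phi (bmode dc dd r Q) S = bmode dc' dd' r (Phi Q) S"
  proof cases
    case 1
    define m where "m = nat \<lfloor>-r\<rfloor>"
    show ?thesis
    proof (cases "m \<in> S")
      case True
      show ?thesis
      proof (cases "finite S")
        case True
        then show ?thesis using 1 \<open>m \<in> S\<close>
          by (simp add: bmode_def m_def[symmetric] scal_def oddmul_def Phi_apply Phi_even_mult Phi_even_cconst
              dc cconst_mult cS_remove[of S m] mult_ac)
      next
        case False
        then have "Q (S - {m}) = 0" using assms(1) by (simp add: fs_def)
        then show ?thesis using 1 \<open>m \<in> S\<close>
          by (simp add: bmode_def m_def[symmetric] scal_def oddmul_def Phi_apply)
      qed
    next
      case False
      then show ?thesis using 1
          by (simp add: bmode_def m_def[symmetric] scal_def oddmul_def Phi_apply)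
    qed
  next
    case 2
    define m where "m = nat \<lfloor>r\<rfloor>"
    have r: "\<not> (r \<in> halfint \<and> r < 0)" using 2 by auto
    show ?thesis
    proof (cases "m \<in> S")
      case False
      show ?thesis
      proof (cases "finite S")
        case True
        then show ?thesis using 2 r \<open>m \<notin> S\<close>
          by (simp add: bmode_def m_def[symmetric] scal_def oddder_def Phi_apply Phi_even_mult Phi_even_cconst
              dd cconst_mult cS_insert[of S m] divide_inverse mult_ac)
      next
        case False
        then have "Q (insert m S) = 0" using assms(1) by (simp add: fs_def)
        then show ?thesis using 2 r \<open>m \<notin> S\<close>
          by (simp add: bmode_def m_def[symmetric] scal_def oddder_def Phi_apply)
      qed
    next
      case True
      then show ?thesis using 2 r
          by (simp add: bmode_def m_def[symmetric] scal_def oddder_def Phi_apply)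
    qed
  next
    case 3
    then have "bmode dc dd r Q = (\<lambda>S. 0)" "bmode dc' dd' r (Phi Q) = (\<lambda>S. 0)"
      by (auto simp: bmode_def)
    then show ?thesis by (simp add: Phi_apply)
  qed
qed

lemma aR_Phi: "fs Q \<Longrightarrow> Phi (aR n Q) = aF n (Phi Q)"
  unfolding aR_def aF_def
proof (rule Phi_amode)
  fix k :: nat assume "k > 0"
  then have "fact k = (of_nat k * fact (k - 1) :: complex)"
    by (metis fact_nonzero fact_num_eq_if of_nat_eq_0_iff less_not_refl2)
  then show "(-1) ^ (k - 1) * beta / fact (k - 1) = (-1) ^ (k - 1) * beta * of_nat k / fact k"
    using \<open>k > 0\<close> by simp
qed simp_all

lemma bR_Phi: "fs Q \<Longrightarrow> Phi (bR r Q) = bF r (Phi Q)"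
  unfolding bR_def bF_def by (rule Phi_bmode) simp_all

lemma fs_aR: "fs Q \<Longrightarrow> fs (aR n Q)" unfolding aR_def by (rule fs_amode)
lemma fs_bR: "fs Q \<Longrightarrow> fs (bR n Q)" unfolding bR_def by (rule fs_bmode)

lemma Phi_uminus: "Phi (- Q) = - Phi Q"
  by (rule ext) (simp add: Phi_apply Phi_even_uminus)

lemma Phi_nord_a: "fs Q \<Longrightarrow> Phi (nord_a aR m k Q) = nord_a aF m k (Phi Q)"
  by (simp add: nord_a_def aR_Phi fs_aR)

lemma Phi_nord_b: "fs Q \<Longrightarrow> Phi (nord_b bR m k Q) = nord_b bF m k (Phi Q)"
  by (simp add: nord_b_def bR_Phi fs_bR Phi_uminus)

lemma Phi_Lop: "fs P \<Longrightarrow> Phi (Lop aR bR n P) = Lop aF bF n (Phi P)"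
proof (rule ext)
  fix S assume fs: "fs P"
  have a: "cconst (cS S) * Phi_even (nord_a aR m (n - m) P S) = nord_a aF m (n - m) (Phi P) S" for m
    using Phi_nord_a[OF fs, of m "n - m"] by (metis Phi_apply)
  have b: "cconst (cS S) * Phi_even (if r \<in> halfint then cconst (of_rat (of_int n - 2 * r)) * nord_b bR r (of_int n - r) P S else 0)
     = (if r \<in> halfint then cconst (of_rat (of_int n - 2 * r)) * nord_b bF r (of_int n - r) (Phi P) S else 0)" for r
    using Phi_nord_b[OF fs, of r "of_int n - r"]
    by (simp add: Phi_even_mult Phi_even_cconst mult.left_commute) (metis Phi_apply)
  have "Phi (Lop aR bR n P) S = cconst (cS S) * Phi_even (Lop aR bR n P S)" by (rule Phi_apply)
  also have "\<dots> = cconst (1/2) * (cconst (cS S) * Phi_even (Sum_any (\<lambda>m. nord_a aR m (n - m) P S)))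
    + cconst (1/4) * (cconst (cS S) * Phi_even (Sum_any (\<lambda>r. (if r \<in> halfint then
          cconst (of_rat (of_int n - 2 * r)) * nord_b bR r (of_int n - r) P S else 0))))"
    unfolding Lop_def by (simp add: Phi_even_add Phi_even_mult Phi_even_cconst distrib_left mult.left_commute)
  also have "\<dots> = Lop aF bF n (Phi P) S"
    unfolding Lop_def Phi_Sum_any a b ..
  finally show "Phi (Lop aR bR n P) S = Lop aF bF n (Phi P) S" .
qed

lemma Phi_Gop: "fs P \<Longrightarrow> Phi (Gop aR bR r P) = Gop aF bF r (Phi P)"
proof (rule ext)
  fix S assume fs: "fs P"
  have a: "cconst (cS S) * Phi_even (aR m (bR (r - of_int m) P) S) = aF m (bF (r - of_int m) (Phi P)) S" for m
    using fs by (metis Phi_apply aR_Phi bR_Phi fs_bR)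
  have "Phi (Gop aR bR r P) S = cconst (cS S) * Phi_even (Gop aR bR r P S)" by (rule Phi_apply)
  also have "\<dots> = Gop aF bF r (Phi P) S"
    unfolding Gop_def Phi_Sum_any a ..
  finally show "Phi (Gop aR bR r P) S = Gop aF bF r (Phi P) S" .
qed

lemma Phi_zero_fun: "Phi (\<lambda>S. 0) = (\<lambda>S. 0)"
  by (simp add: Phi_def)

lemma NS_Phi: "fs P \<Longrightarrow> NS_singular aR bR P \<Longrightarrow> NS_singular aF bF (Phi P)"
  unfolding NS_singular_def
  by (metis Phi_Lop Phi_Gop Phi_zero_fun)

lemma wf_fs: "wf_spoly P \<Longrightarrow> fs P"
  unfolding wf_spoly_def fs_def by blast


lemma fps_pow_hom:
  fixes h :: "epoly \<Rightarrow> epoly"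
  assumes add: "\<And>x y. h (x + y) = h x + h y" and mult: "\<And>x y. h (x * y) = h x * h y"
    and h0: "h 0 = 0" and h1: "h 1 = 1"
  shows "h (fps_nth (X ^ k) m) = fps_nth ((Abs_fps (\<lambda>n. h (fps_nth X n))) ^ k) m"
proof (induction k arbitrary: m)
  case 0
  then show ?case by (simp add: h0 h1)
next
  case (Suc k)
  have hs: "h (sum g A) = (\<Sum>x\<in>A. h (g x))" for g and A :: "nat set"
    by (induction A rule: infinite_finite_induct) (auto simp: h0 add)
  show ?case
    by (simp add: fps_mult_nth hs mult Suc.IH)
qed

lemma Phi_even_exp_coeff:
  "Phi_even (exp_coeff X m) = exp_coeff (Abs_fps (\<lambda>n. Phi_even (fps_nth X n))) m"
  unfolding exp_coeff_def
  by (simp add: Phi_even_sum Phi_even_mult Phi_even_cconst fps_pow_hom[of Phi_even] Phi_even_add)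

lemma Phi_even_esym: "Phi_even (esym m) = chern m"
proof -
  have "Abs_fps (\<lambda>n. Phi_even (fps_nth (Abs_fps (\<lambda>n. if n = 0 then 0 else cconst ((-1) ^ (n - 1) / of_nat n) * evar n)) n))
      = Abs_fps (\<lambda>n. if n = 0 then 0 else cconst ((-1) ^ (n - 1) * fact (n - 1)) * evar n)"
  proof (rule fps_ext)
    fix n :: nat
    show "fps_nth (Abs_fps (\<lambda>n. Phi_even (fps_nth (Abs_fps (\<lambda>n. if n = 0 then 0 else cconst ((-1) ^ (n - 1) / of_nat n) * evar n)) n))) n
      = fps_nth (Abs_fps (\<lambda>n. if n = 0 then 0 else cconst ((-1) ^ (n - 1) * fact (n - 1)) * evar n)) n"
    proof (cases "n = 0")
      case False
      then have "fact n = (of_nat n * fact (n - 1) :: complex)"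
        by (metis fact_nonzero fact_num_eq_if of_nat_eq_0_iff less_not_refl2 not_gr0)
      then have "(-1) ^ (n - 1) / of_nat n * fact n = ((-1) ^ (n - 1) * fact (n - 1) :: complex)"
        using False by simp
      then show ?thesis using False
        by (simp add: Phi_even_mult Phi_even_cconst Phi_even_evar flip: cconst_mult mult.assoc)
    qed simp
  qed
  then show ?thesis
    unfolding esym_def chern_def by (simp add: Phi_even_exp_coeff)
qed

lemma Phi_even_detm: "Phi_even (detm k M) = detm k (\<lambda>a b. Phi_even (M a b))"
  unfolding detm_def by (simp add: Phi_even_sum Phi_even_mult Phi_even_prod Phi_even_of_int)

lemma Phi_even_schur: "Phi_even (schur l) = koschorke l"
  unfolding schur_def koschorke_def Phi_even_detm Phi_even_esym ..

lemma oddprod_list: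
  assumes "sorted_wrt (<) xs"
  shows "foldr (\<lambda>j acc. scal (w j) (oddmul j acc)) xs one_s
       = (\<lambda>S. if S = set xs then cconst (\<Prod>j\<in>set xs. w j) else 0)"
  using assms
proof (induction xs)
  case Nil
  then show ?case by (auto simp: one_s_def)
next
  case (Cons x xs)
  have xn: "x \<notin> set xs" and lt: "\<forall>y\<in>set xs. x < y" using Cons.prems by auto
  have qs: "qsign x (set xs) = 1"
  proof -
    have e: "{j \<in> set xs. j < x} = {}" using lt by auto
    show ?thesis unfolding qsign_def e by simp
  qed
  show ?case
  proof (rule ext)
    fix S
    have e1: "(x \<in> S \<and> S - {x} = set xs) \<longleftrightarrow> S = insert x (set xs)"
      using xn by auto
    show "foldr (\<lambda>j acc. scal (w j) (oddmul j acc)) (x # xs) one_s S =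
      (if S = set (x # xs) then cconst (\<Prod>j\<in>set (x # xs). w j) else 0)"
      using Cons.IH Cons.prems e1 xn qs
      by (auto simp: scal_def oddmul_def cconst_mult)
  qed
qed

lemma oddprod_finite:
  "finite J \<Longrightarrow> oddprod w J = (\<lambda>S. if S = J then cconst (\<Prod>j\<in>J. w j) else 0)"
proof -
  assume f: "finite J"
  have sJ: "set (sorted_list_of_set J) = J" using f by (rule sorted_list_of_set.set_sorted_key_list_of_set)
  show ?thesis
    unfolding oddprod_def oddprod_list[OF strict_sorted_list_of_set[of J], of w] sJ ..
qed

lemma Phi_schur_q: "finite J \<Longrightarrow> Phi (schur_q l J) = class_F l J"
  by (rule ext) (simp add: Phi_apply schur_q_def class_F_def oddprod_finite Phi_even_mult Phi_even_schur
      Phi_even_cconst cS_def mult.commute)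


definition inspan :: "'i set \<Rightarrow> ('i \<Rightarrow> epoly) \<Rightarrow> epoly \<Rightarrow> bool" where
  "inspan I B f \<longleftrightarrow> (\<exists>a. finite {i. a i \<noteq> 0} \<and> (\<forall>i. a i \<noteq> 0 \<longrightarrow> i \<in> I)
      \<and> f = Sum_any (\<lambda>i. cconst (a i) * B i))"

lemma Sum_any_cconst_finite:
  assumes "finite {i. a i \<noteq> 0}" "{i. a i \<noteq> 0} \<subseteq> F" "finite F"
  shows "Sum_any (\<lambda>i. cconst (a i) * B i) = (\<Sum>i\<in>F. cconst (a i) * B i)"
  by (rule Sum_any.expand_superset) (use assms in auto)

lemma inspan_0: "inspan I B 0"
  unfolding inspan_def by (rule exI[of _ "\<lambda>_. 0"]) simp

lemma inspan_gen: "i \<in> I \<Longrightarrow> inspan I B (B i)"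
  unfolding inspan_def
proof (rule exI[of _ "\<lambda>j. if j = i then 1 else 0"])
  assume i: "i \<in> I"
  have "Sum_any (\<lambda>j. cconst (if j = i then 1 else 0) * B j) = Sum_any (\<lambda>j. if j = i then B j else 0)"
    by (rule Sum_any.cong) simp
  also have "\<dots> = B i" by simp
  finally show "finite {j. (if j = i then 1 else 0) \<noteq> (0::complex)} \<and> (\<forall>j. (if j = i then 1 else 0) \<noteq> (0::complex) \<longrightarrow> j \<in> I)
     \<and> B i = Sum_any (\<lambda>j. cconst (if j = i then 1 else 0) * B j)" using i by simp
qed

lemma inspan_add:
  assumes "inspan I B f" "inspan I B g" shows "inspan I B (f + g)"
proof -
  obtain a where a: "finite {i. a i \<noteq> 0}" "\<forall>i. a i \<noteq> 0 \<longrightarrow> i \<in> I" "f = Sum_any (\<lambda>i. cconst (a i) * B i)"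
    using assms(1) unfolding inspan_def by blast
  obtain b where b: "finite {i. b i \<noteq> 0}" "\<forall>i. b i \<noteq> 0 \<longrightarrow> i \<in> I" "g = Sum_any (\<lambda>i. cconst (b i) * B i)"
    using assms(2) unfolding inspan_def by blast
  let ?F = "{i. a i \<noteq> 0} \<union> {i. b i \<noteq> 0}"
  have fin: "finite ?F" using a b by simp
  have fab: "finite {i. a i + b i \<noteq> 0}"
    by (rule finite_subset[OF _ fin]) auto
  have "f + g = (\<Sum>i\<in>?F. cconst (a i) * B i) + (\<Sum>i\<in>?F. cconst (b i) * B i)"
    using a b fin by (simp add: Sum_any_cconst_finite[of _ ?F])
  also have "\<dots> = (\<Sum>i\<in>?F. cconst (a i + b i) * B i)"
    by (simp add: sum.distrib[symmetric] cconst_add distrib_right)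
  also have "\<dots> = Sum_any (\<lambda>i. cconst (a i + b i) * B i)"
    using fin fab by (intro Sum_any_cconst_finite[symmetric]) auto
  finally show ?thesis unfolding inspan_def
    using a b fab by (intro exI[of _ "\<lambda>i. a i + b i"]) (metis add.right_neutral add_0)
qed

lemma inspan_cmult:
  assumes "inspan I B f" shows "inspan I B (cconst c * f)"
proof -
  obtain a where a: "finite {i. a i \<noteq> 0}" "\<forall>i. a i \<noteq> 0 \<longrightarrow> i \<in> I" "f = Sum_any (\<lambda>i. cconst (a i) * B i)"
    using assms(1) unfolding inspan_def by blast
  let ?F = "{i. a i \<noteq> 0}"
  have "cconst c * f = (\<Sum>i\<in>?F. cconst (c * a i) * B i)"
    using a by (simp add: Sum_any_cconst_finite[of _ ?F] sum_distrib_left cconst_mult mult.assoc)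
  also have "\<dots> = Sum_any (\<lambda>i. cconst (c * a i) * B i)"
    using a by (intro Sum_any_cconst_finite[symmetric]) auto
  finally show ?thesis unfolding inspan_def
    using a by (intro exI[of _ "\<lambda>i. c * a i"]) (auto intro: finite_subset[OF _ a(1)])
qed

lemma inspan_sum:
  "finite A \<Longrightarrow> (\<And>x. x \<in> A \<Longrightarrow> inspan I B (g x)) \<Longrightarrow> inspan I B (sum g A)"
  by (induction A rule: finite_induct) (auto intro: inspan_add inspan_0)

lemma inspan_uminus: "inspan I B f \<Longrightarrow> inspan I B (- f)"
  using inspan_cmult[of I B f "-1"] by (simp add: cconst_uminus)

lemma inspan_diff: "inspan I B f \<Longrightarrow> inspan I B g \<Longrightarrow> inspan I B (f - g)"
  using inspan_add[of I B f "- g"] inspan_uminus[of I B g] by simp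

lemma inspan_expand:
  assumes "inspan I B f"
  obtains F c where "finite F" "F \<subseteq> I" "f = (\<Sum>i\<in>F. cconst (c i) * B i)"
proof -
  obtain a where a: "finite {i. a i \<noteq> 0}" "\<forall>i. a i \<noteq> 0 \<longrightarrow> i \<in> I" "f = Sum_any (\<lambda>i. cconst (a i) * B i)"
    using assms(1) unfolding inspan_def by blast
  show ?thesis
    by (rule that[of "{i. a i \<noteq> 0}" a]) (use a in \<open>auto simp: Sum_any_cconst_finite\<close>)
qed

lemma inspan_trans:
  assumes "inspan I B f" "\<And>i. i \<in> I \<Longrightarrow> inspan J C (B i)"
  shows "inspan J C f"
proof -
  obtain F c where "finite F" "F \<subseteq> I" "f = (\<Sum>i\<in>F. cconst (c i) * B i)"
    using inspan_expand[OF assms(1)] by blast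
  then show ?thesis
    using assms(2) by (auto intro!: inspan_sum inspan_cmult)
qed

section \<open>Degree and weight of exponent vectors\<close>

definition edeg :: "(nat \<Rightarrow>\<^sub>0 nat) \<Rightarrow> nat" where
  "edeg e = (\<Sum>n\<in>Poly_Mapping.keys e. Poly_Mapping.lookup e n)"
definition ewt :: "(nat \<Rightarrow>\<^sub>0 nat) \<Rightarrow> nat" where
  "ewt e = (\<Sum>n\<in>Poly_Mapping.keys e. n * Poly_Mapping.lookup e n)"

lemma keys_sum_superset:
  fixes g :: "nat \<Rightarrow> nat \<Rightarrow> nat"
  assumes "finite K" "Poly_Mapping.keys e \<subseteq> K" "\<And>n. g n 0 = 0"
  shows "(\<Sum>n\<in>Poly_Mapping.keys e. g n (Poly_Mapping.lookup e n)) = (\<Sum>n\<in>K. g n (Poly_Mapping.lookup e n))"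
  by (rule sum.mono_neutral_left) (use assms in \<open>auto simp: in_keys_iff\<close>)

lemma edeg_add: "edeg (a + b) = edeg a + edeg b"
proof -
  let ?K = "Poly_Mapping.keys a \<union> Poly_Mapping.keys b"
  have "edeg (a + b) = (\<Sum>n\<in>?K. Poly_Mapping.lookup (a + b) n)"
    unfolding edeg_def using keys_add[of a b] keys_sum_superset[of ?K "a+b" "\<lambda>n x. x"] by auto
  also have "\<dots> = (\<Sum>n\<in>?K. Poly_Mapping.lookup a n) + (\<Sum>n\<in>?K. Poly_Mapping.lookup b n)"
    by (simp add: lookup_add sum.distrib)
  also have "\<dots> = edeg a + edeg b"
    unfolding edeg_def using keys_sum_superset[of ?K a "\<lambda>n x. x"] keys_sum_superset[of ?K b "\<lambda>n x. x"] by auto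
  finally show ?thesis .
qed

lemma ewt_add: "ewt (a + b) = ewt a + ewt b"
proof -
  let ?K = "Poly_Mapping.keys a \<union> Poly_Mapping.keys b"
  have "ewt (a + b) = (\<Sum>n\<in>?K. n * Poly_Mapping.lookup (a + b) n)"
    unfolding ewt_def using keys_add[of a b] keys_sum_superset[of ?K "a+b" "\<lambda>n x. n * x"] by auto
  also have "\<dots> = (\<Sum>n\<in>?K. n * Poly_Mapping.lookup a n) + (\<Sum>n\<in>?K. n * Poly_Mapping.lookup b n)"
    by (simp add: lookup_add sum.distrib distrib_left)
  also have "\<dots> = ewt a + ewt b"
    unfolding ewt_def using keys_sum_superset[of ?K a "\<lambda>n x. n * x"] keys_sum_superset[of ?K b "\<lambda>n x. n * x"] by auto
  finally show ?thesis .
qed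

lemma edeg_single[simp]: "edeg (Poly_Mapping.single v 1) = 1"
  by (simp add: edeg_def)
lemma ewt_single[simp]: "ewt (Poly_Mapping.single v 1) = v"
  by (simp add: ewt_def)
lemma edeg_single'[simp]: "edeg (Poly_Mapping.single v (Suc 0)) = 1"
  by (simp add: edeg_def)
lemma ewt_single'[simp]: "ewt (Poly_Mapping.single v (Suc 0)) = v"
  by (simp add: ewt_def)
lemma edeg_0[simp]: "edeg 0 = 0" by (simp add: edeg_def)
lemma ewt_0[simp]: "ewt 0 = 0" by (simp add: ewt_def)

lemma ewt_pos:
  assumes "e \<noteq> 0" "\<forall>v\<in>Poly_Mapping.keys e. 1 \<le> v"
  shows "ewt e \<ge> 1"
proof -
  obtain v where v: "v \<in> Poly_Mapping.keys e" using assms(1) by fastforce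
  then have "v * Poly_Mapping.lookup e v \<ge> 1" using assms(2) by (simp add: in_keys_iff)
  moreover have "v * Poly_Mapping.lookup e v \<le> ewt e"
    unfolding ewt_def using v by (intro member_le_sum) auto
  ultimately show ?thesis by (meson le_trans one_le_mult_iff)
qed

lemma split_single:
  fixes e :: "nat \<Rightarrow>\<^sub>0 nat"
  assumes "v \<in> Poly_Mapping.keys e"
  shows "e = Poly_Mapping.single v 1 + (e - Poly_Mapping.single v 1)"
  using assms by (intro poly_mapping_eqI) (auto simp: lookup_add lookup_minus lookup_single when_def in_keys_iff)

lemma keys_minus_single: "Poly_Mapping.keys (e - Poly_Mapping.single v 1) \<subseteq> Poly_Mapping.keys (e :: nat \<Rightarrow>\<^sub>0 nat)"
  by (auto simp: in_keys_iff lookup_minus)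


definition Xs :: "(nat \<Rightarrow> complex) \<Rightarrow> epoly fps" where
  "Xs c = Abs_fps (\<lambda>n. if n = 0 then 0 else cconst (c n) * evar n)"

definition cE :: "nat \<Rightarrow> complex" where "cE n = (-1) ^ (n - 1) / of_nat n"

lemma esym_Xs: "esym m = (if m < 0 then 0 else exp_coeff (Xs cE) (nat m))"
  unfolding esym_def Xs_def cE_def ..

lemma cconst_evar: "cconst c * evar n = Poly_Mapping.single (Poly_Mapping.single n 1) c"
  by (simp add: cconst_def evar_def mult_single)

lemma keys_cconst_mult: "Poly_Mapping.keys (cconst c * f) \<subseteq> Poly_Mapping.keys f"
  by (auto simp: in_keys_iff lookup_cconst_mult)

lemma keys_Xpow:
  "e \<in> Poly_Mapping.keys (fps_nth (Xs c ^ k) m) \<Longrightarrow> edeg e = k \<and> ewt e = m \<and> (\<forall>v\<in>Poly_Mapping.keys e. 1 \<le> v)"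
proof (induction k arbitrary: m e)
  case 0
  then show ?case
    by (cases "m = 0") (auto simp: lookup_one in_keys_iff when_def)
next
  case (Suc k)
  have "fps_nth (Xs c ^ Suc k) m = (\<Sum>i=0..m. fps_nth (Xs c) i * fps_nth (Xs c ^ k) (m - i))"
    by (simp add: fps_mult_nth)
  with Suc.prems obtain i where i: "i \<in> {0..m}" "e \<in> Poly_Mapping.keys (fps_nth (Xs c) i * fps_nth (Xs c ^ k) (m - i))"
    using keys_sum by fastforce
  then obtain a b where ab: "e = a + b" "a \<in> Poly_Mapping.keys (fps_nth (Xs c) i)" "b \<in> Poly_Mapping.keys (fps_nth (Xs c ^ k) (m - i))"
    using keys_mult by blast
  have i0: "i \<noteq> 0" and a: "a = Poly_Mapping.single i 1"
    using ab(2) by (auto simp: Xs_def cconst_evar split: if_splits)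
  have IH: "edeg b = k \<and> ewt b = m - i \<and> (\<forall>v\<in>Poly_Mapping.keys b. 1 \<le> v)"
    by (rule Suc.IH[OF ab(3)])
  have "\<forall>v\<in>Poly_Mapping.keys e. 1 \<le> v"
    using keys_add[of a b] IH i0 ab(1) a by auto
  then show ?case using IH ab(1) a i i0 by (simp add: edeg_add ewt_add)
qed

definition Rr :: "nat \<Rightarrow> epoly" where
  "Rr m = (\<Sum>k\<in>{2..m}. cconst (1 / fact k) * fps_nth (Xs cE ^ k) m)"

lemma esym_split:
  assumes "m \<ge> 1"
  shows "esym (int m) = cconst (cE m) * evar m + Rr m"
proof -
  have set: "{..m} = insert 0 (insert 1 {2..m})" using assms by auto
  have "exp_coeff (Xs cE) m = cconst (1 / fact 0) * fps_nth (Xs cE ^ 0) m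
     + (cconst (1 / fact 1) * fps_nth (Xs cE ^ 1) m + Rr m)"
    unfolding exp_coeff_def set Rr_def by (simp add: sum.insert)
  also have "\<dots> = cconst (cE m) * evar m + Rr m"
    using assms by (simp add: Xs_def)
  finally show ?thesis by (simp add: esym_Xs)
qed

lemma keys_Rr:
  "e \<in> Poly_Mapping.keys (Rr m) \<Longrightarrow> edeg e \<ge> 2 \<and> ewt e = m \<and> (\<forall>v\<in>Poly_Mapping.keys e. 1 \<le> v)"
proof -
  assume "e \<in> Poly_Mapping.keys (Rr m)"
  then obtain k where k: "k \<in> {2..m}" "e \<in> Poly_Mapping.keys (cconst (1 / fact k) * fps_nth (Xs cE ^ k) m)"
    unfolding Rr_def using keys_sum by fastforce
  then have "e \<in> Poly_Mapping.keys (fps_nth (Xs cE ^ k) m)" using keys_cconst_mult by blast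
  then show ?thesis using keys_Xpow k(1) by fastforce
qed

lemma cE_nz: "m \<ge> 1 \<Longrightarrow> cE m \<noteq> 0"
  by (simp add: cE_def)

section \<open>Spanning by products of elementary symmetric functions\<close>

definition Pos :: "nat multiset set" where "Pos = {M. 0 \<notin># M}"
definition EM :: "nat multiset \<Rightarrow> epoly" where "EM M = (\<Prod>m\<in>#M. esym (int m))"
definition mon :: "(nat \<Rightarrow>\<^sub>0 nat) \<Rightarrow> epoly" where "mon e = Poly_Mapping.single e 1"

lemma EM_add: "EM (M + N) = EM M * EM N" by (simp add: EM_def)
lemma EM_empty: "EM {#} = 1" by (simp add: EM_def)
lemma EM_single: "EM {#m#} = esym (int m)" by (simp add: EM_def)
lemma mon_add: "mon (a + b) = mon a * mon b" by (simp add: mon_def mult_single)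
lemma mon_single: "mon (Poly_Mapping.single v 1) = evar v" by (simp add: mon_def evar_def)
lemma single_cmon: "Poly_Mapping.single e c = cconst c * mon e"
  by (simp add: mon_def cconst_def mult_single)
lemma mon_0: "mon 0 = 1" by (simp add: mon_def)

lemma inspan_mult_E:
  assumes "inspan Pos EM f" "inspan Pos EM g"
  shows "inspan Pos EM (f * g)"
proof -
  obtain F c where F: "finite F" "F \<subseteq> Pos" "f = (\<Sum>i\<in>F. cconst (c i) * EM i)"
    using inspan_expand[OF assms(1)] by blast
  obtain G d where G: "finite G" "G \<subseteq> Pos" "g = (\<Sum>i\<in>G. cconst (d i) * EM i)"
    using inspan_expand[OF assms(2)] by blast
  have "f * g = (\<Sum>M\<in>F. \<Sum>N\<in>G. cconst (c M * d N) * EM (M + N))"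
    unfolding F(3) G(3) sum_product by (simp add: EM_add cconst_mult mult_ac)
  moreover have "inspan Pos EM (\<Sum>M\<in>F. \<Sum>N\<in>G. cconst (c M * d N) * EM (M + N))"
    using F G by (intro inspan_sum inspan_cmult inspan_gen) (auto simp: Pos_def)
  ultimately show ?thesis by simp
qed

lemma mon_span:
  "(\<forall>v\<in>Poly_Mapping.keys e. 1 \<le> v) \<Longrightarrow> inspan Pos EM (mon e)"
proof (induction "ewt e" arbitrary: e rule: less_induct)
  case less
  have D: "inspan Pos EM (mon f)" if f: "\<forall>v\<in>Poly_Mapping.keys f. 1 \<le> v" "ewt f = ewt e" "f \<noteq> 0"
       "\<forall>u. f \<noteq> Poly_Mapping.single u 1" for f
  proof -
    obtain u where u: "u \<in> Poly_Mapping.keys f" using f(3) by fastforce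
    define f' where "f' = f - Poly_Mapping.single u 1"
    have fs: "f = Poly_Mapping.single u 1 + f'" unfolding f'_def by (rule split_single[OF u])
    have f'0: "f' \<noteq> 0" using fs f(4) by auto
    have f'k: "\<forall>v\<in>Poly_Mapping.keys f'. 1 \<le> v" using f(1) keys_minus_single unfolding f'_def by blast
    have w1: "ewt f' \<ge> 1" by (rule ewt_pos[OF f'0 f'k])
    have u1: "u \<ge> 1" using f(1) u by blast
    have we: "ewt f = u + ewt f'" using fs by (simp add: ewt_add)
    have "inspan Pos EM (mon (Poly_Mapping.single u 1))"
      using less.hyps[of "Poly_Mapping.single u 1"] u1 w1 we f(2) by simp
    moreover have "inspan Pos EM (mon f')"
      using less.hyps[of f'] f'k u1 we f(2) by simp
    ultimately show ?thesis using fs by (simp add: mon_add inspan_mult_E)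
  qed
  show ?case
  proof (cases "e = 0")
    case True
    then show ?thesis using inspan_gen[of "{#}" Pos EM] by (simp add: mon_0 EM_empty Pos_def)
  next
    case e0: False
    show ?thesis
    proof (cases "\<exists>u. e = Poly_Mapping.single u 1")
      case False
      then show ?thesis using D[of e] less.prems e0 by blast
    next
      case True
      then obtain u where u: "e = Poly_Mapping.single u 1" by blast
      then have u1: "u \<ge> 1" using less.prems by simp
      have "Rr u = (\<Sum>f\<in>Poly_Mapping.keys (Rr u). cconst (Poly_Mapping.lookup (Rr u) f) * mon f)"
        by (subst pm_sum_singles) (simp add: single_cmon)
      moreover have "inspan Pos EM (\<Sum>f\<in>Poly_Mapping.keys (Rr u). cconst (Poly_Mapping.lookup (Rr u) f) * mon f)"
      proof (intro inspan_sum inspan_cmult, simp)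
        fix f assume "f \<in> Poly_Mapping.keys (Rr u)"
        from keys_Rr[OF this] have k: "edeg f \<ge> 2" "ewt f = u" "\<forall>v\<in>Poly_Mapping.keys f. 1 \<le> v" by auto
        have "f \<noteq> 0" using k(1) by auto
        moreover have "\<forall>w. f \<noteq> Poly_Mapping.single w 1" using k(1) by auto
        ultimately show "inspan Pos EM (mon f)" using D[of f] k u by simp
      qed
      ultimately have R: "inspan Pos EM (Rr u)" by simp
      have Es: "inspan Pos EM (esym (int u))"
        using inspan_gen[of "{#u#}" Pos EM] u1 by (simp add: EM_single Pos_def)
      have "evar u = cconst (1 / cE u) * (esym (int u) - Rr u)"
        using esym_split[OF u1] cE_nz[OF u1] by (simp add: mult.assoc flip: cconst_mult)
      then have "inspan Pos EM (evar u)" using R Es by (simp add: inspan_cmult inspan_diff)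
      then show ?thesis using u mon_single[of u] by simp
    qed
  qed
qed

lemma wf_span_E:
  assumes "\<forall>e\<in>Poly_Mapping.keys f. \<forall>v\<in>Poly_Mapping.keys e. 1 \<le> v"
  shows "inspan Pos EM f"
proof -
  have "f = (\<Sum>e\<in>Poly_Mapping.keys f. cconst (Poly_Mapping.lookup f e) * mon e)"
    by (subst pm_sum_singles) (simp add: single_cmon)
  moreover have "inspan Pos EM (\<Sum>e\<in>Poly_Mapping.keys f. cconst (Poly_Mapping.lookup f e) * mon e)"
    using assms by (intro inspan_sum inspan_cmult mon_span) auto
  ultimately show ?thesis by simp
qed


definition lead :: "epoly \<Rightarrow> (nat \<Rightarrow>\<^sub>0 nat) \<Rightarrow> complex \<Rightarrow> bool" where
  "lead f A c \<longleftrightarrow> Poly_Mapping.lookup f A = c \<and> c \<noteq> 0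
     \<and> (\<forall>e\<in>Poly_Mapping.keys f. e \<noteq> A \<longrightarrow> edeg e > edeg A)"

lemma lookup_high:
  assumes "\<forall>e\<in>Poly_Mapping.keys h. edeg e > n" "edeg a \<le> n"
  shows "Poly_Mapping.lookup h a = 0"
  using assms by (metis in_keys_iff not_le)

lemma lead_mult:
  assumes f: "lead f A c" and g: "lead g B d"
  shows "lead (f * g) (A + B) (c * d)"
proof -
  have fk: "\<forall>a\<in>Poly_Mapping.keys f. edeg a \<ge> edeg A" using f unfolding lead_def
    by (metis order.strict_implies_order order_refl)
  have gk: "\<forall>a\<in>Poly_Mapping.keys g. edeg a \<ge> edeg B" using g unfolding lead_def
    by (metis order.strict_implies_order order_refl)
  define f1 where "f1 = f - Poly_Mapping.single A c"
  define g1 where "g1 = g - Poly_Mapping.single B d"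
  have f1k: "\<forall>e\<in>Poly_Mapping.keys f1. edeg e > edeg A"
    using f unfolding f1_def lead_def by (auto simp: in_keys_iff lookup_minus lookup_single when_def split: if_splits)
  have g1k: "\<forall>e\<in>Poly_Mapping.keys g1. edeg e > edeg B"
    using g unfolding g1_def lead_def by (auto simp: in_keys_iff lookup_minus lookup_single when_def split: if_splits)
  have fg: "f * g = Poly_Mapping.single (A + B) (c * d) + (Poly_Mapping.single A c * g1 + f1 * g)"
    unfolding f1_def g1_def by (simp add: algebra_simps mult_single)
  have k1: "\<forall>e\<in>Poly_Mapping.keys (Poly_Mapping.single A c * g1). edeg e > edeg (A + B)"
    using keys_mult[of "Poly_Mapping.single A c" g1] g1k
    by (auto simp: edeg_add split: if_splits)
  have k2: "\<forall>e\<in>Poly_Mapping.keys (f1 * g). edeg e > edeg (A + B)"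
  proof
    fix e assume "e \<in> Poly_Mapping.keys (f1 * g)"
    then obtain a b where "e = a + b" "a \<in> Poly_Mapping.keys f1" "b \<in> Poly_Mapping.keys g"
      using keys_mult by blast
    then show "edeg e > edeg (A + B)" using f1k gk by (fastforce simp: edeg_add)
  qed
  have "Poly_Mapping.lookup (f * g) (A + B) = c * d"
    unfolding fg lookup_add using lookup_high[OF k1, of "A+B"] lookup_high[OF k2, of "A+B"] by simp
  moreover have "c * d \<noteq> 0" using f g by (simp add: lead_def)
  moreover have "\<forall>e\<in>Poly_Mapping.keys (f * g). e \<noteq> A + B \<longrightarrow> edeg e > edeg (A + B)"
  proof (intro ballI impI)
    fix e assume e: "e \<in> Poly_Mapping.keys (f * g)" "e \<noteq> A + B"
    then obtain a b where ab: "e = a + b" "a \<in> Poly_Mapping.keys f" "b \<in> Poly_Mapping.keys g"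
      using keys_mult by blast
    then have "a \<noteq> A \<or> b \<noteq> B" using e by auto
    then show "edeg e > edeg (A + B)"
      using ab f g fk gk unfolding lead_def by (fastforce simp: edeg_add)
  qed
  ultimately show ?thesis by (simp add: lead_def)
qed

lemma lead_esym:
  assumes "m \<ge> 1"
  shows "lead (esym (int m)) (Poly_Mapping.single m 1) (cE m)"
proof -
  have r: "\<forall>e\<in>Poly_Mapping.keys (Rr m). edeg e > 1" using keys_Rr by fastforce
  have l0: "Poly_Mapping.lookup (Rr m) (Poly_Mapping.single m 1) = 0"
    using lookup_high[OF r] by simp
  show ?thesis
    unfolding lead_def esym_split[OF assms]
  proof (intro conjI ballI impI)
    show "Poly_Mapping.lookup (cconst (cE m) * evar m + Rr m) (Poly_Mapping.single m 1) = cE m"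
      using l0 by (simp add: lookup_add cconst_evar)
    show "cE m \<noteq> 0" using cE_nz[OF assms] .
    fix e assume e: "e \<in> Poly_Mapping.keys (cconst (cE m) * evar m + Rr m)" "e \<noteq> Poly_Mapping.single m 1"
    then have "e \<in> Poly_Mapping.keys (Rr m)"
      using keys_add[of "cconst (cE m) * evar m" "Rr m"] by (auto simp: cconst_evar split: if_splits)
    then show "edeg (Poly_Mapping.single m 1) < edeg e" using r by simp
  qed
qed

lemma esym_0: "esym 0 = 1"
  by (simp add: esym_Xs exp_coeff_def)

lemma lead_1: "lead 1 0 1"
  by (simp add: lead_def lookup_one)

definition lexp :: "nat multiset \<Rightarrow> (nat \<Rightarrow>\<^sub>0 nat)" where
  "lexp M = (\<Sum>m\<in>#M. Poly_Mapping.single m 1)"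

lemma lookup_lexp: "Poly_Mapping.lookup (lexp M) v = count M v"
  by (induction M) (auto simp: lexp_def lookup_add lookup_single when_def)

lemma lexp_inj: "lexp M = lexp N \<Longrightarrow> M = N"
  by (metis lookup_lexp multiset_eqI)

lemma edeg_lexp: "edeg (lexp M) = size M"
  by (induction M) (auto simp: lexp_def edeg_add)

definition lcE :: "nat multiset \<Rightarrow> complex" where "lcE M = (\<Prod>m\<in>#M. cE m)"

lemma lead_EM: "M \<in> Pos \<Longrightarrow> lead (EM M) (lexp M) (lcE M)"
proof (induction M)
  case empty
  then show ?case using lead_1 by (simp add: EM_def lexp_def lcE_def)
next
  case (add x M)
  then have x: "x \<ge> 1" and M: "M \<in> Pos" by (auto simp: Pos_def)
  have "lead (esym (int x) * EM M) (Poly_Mapping.single x 1 + lexp M) (cE x * lcE M)"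
    by (rule lead_mult[OF lead_esym[OF x] add.IH[OF M]])
  then show ?case by (simp add: EM_def lexp_def lcE_def)
qed

lemma cconst_sum: "cconst (sum g A) = (\<Sum>x\<in>A. cconst (g x))"
  by (induction A rule: infinite_finite_induct) (auto simp: cconst_add)

lemma E_indep:
  assumes I: "finite I" and pos: "\<And>i. i \<in> I \<Longrightarrow> Mi i \<in> Pos"
    and z: "(\<Sum>i\<in>I. cconst (c i) * EM (Mi i)) = 0"
  shows "(\<Sum>i\<in>{i\<in>I. Mi i = M}. c i) = 0"
proof (rule ccontr)
  define G where "G M = (\<Sum>i\<in>{i\<in>I. Mi i = M}. c i)" for M
  assume "(\<Sum>i\<in>{i\<in>I. Mi i = M}. c i) \<noteq> 0"
  then have GM: "G M \<noteq> 0" by (simp add: G_def)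
  define T where "T = {N \<in> Mi ` I. G N \<noteq> 0}"
  have MT: "M \<in> T"
  proof -
    have "{i\<in>I. Mi i = M} \<noteq> {}" using GM unfolding G_def by (metis sum.empty)
    then show ?thesis using GM by (auto simp: T_def)
  qed
  have Tfin: "finite T" using I by (simp add: T_def)
  obtain M0 where M0: "M0 \<in> T" "\<forall>N\<in>T. size M0 \<le> size N"
    using ex_min_if_finite[OF Tfin] MT
    by (metis (mono_tags, lifting) Tfin arg_min_if_finite(1) arg_min_if_finite(2) empty_iff not_le)
  have M0pos: "M0 \<in> Pos" using M0(1) pos by (auto simp: T_def)
  have regroup: "(\<Sum>i\<in>I. cconst (c i) * EM (Mi i)) = (\<Sum>N\<in>Mi ` I. cconst (G N) * EM N)"
  proof -
    have "(\<Sum>i\<in>I. cconst (c i) * EM (Mi i)) = (\<Sum>N\<in>Mi ` I. \<Sum>i\<in>{i\<in>I. Mi i = N}. cconst (c i) * EM (Mi i))"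
      by (rule sum.image_gen[OF I])
    also have "\<dots> = (\<Sum>N\<in>Mi ` I. cconst (G N) * EM N)"
      by (rule sum.cong[OF refl]) (simp add: G_def cconst_sum sum_distrib_right)
    finally show ?thesis .
  qed
  have term0: "G N * Poly_Mapping.lookup (EM N) (lexp M0) = 0" if N: "N \<in> Mi ` I" "N \<noteq> M0" for N
  proof (cases "G N = 0")
    case False
    then have NT: "N \<in> T" using N by (simp add: T_def)
    have Npos: "N \<in> Pos" using N pos by auto
    have le: "size M0 \<le> size N" using M0(2) NT by blast
    have ne: "lexp M0 \<noteq> lexp N" using N(2) lexp_inj by metis
    have "Poly_Mapping.lookup (EM N) (lexp M0) = 0"
      using lead_EM[OF Npos] ne le unfolding lead_def
      by (metis edeg_lexp in_keys_iff not_le)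
    then show ?thesis by simp
  qed simp
  have "0 = Poly_Mapping.lookup (\<Sum>N\<in>Mi ` I. cconst (G N) * EM N) (lexp M0)"
    using z regroup by simp
  also have "\<dots> = (\<Sum>N\<in>Mi ` I. G N * Poly_Mapping.lookup (EM N) (lexp M0))"
    by (simp add: lookup_sum lookup_cconst_mult)
  also have "\<dots> = G M0 * Poly_Mapping.lookup (EM M0) (lexp M0)"
  proof -
    have M0I: "M0 \<in> Mi ` I" using M0(1) by (simp add: T_def)
    have "(\<Sum>N\<in>Mi ` I - {M0}. G N * Poly_Mapping.lookup (EM N) (lexp M0)) = 0"
      using term0 by (intro sum.neutral) blast
    then show ?thesis using I M0I by (simp add: sum.remove[of _ M0])
  qed
  also have "\<dots> = G M0 * lcE M0"
    using lead_EM[OF M0pos] by (simp add: lead_def)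
  finally show False using M0(1) lead_EM[OF M0pos] by (simp add: T_def lead_def)
qed


definition nu :: "nat list \<Rightarrow> (nat \<Rightarrow> nat) \<Rightarrow> nat \<Rightarrow> int" where
  "nu l \<sigma> a = int (l ! a) + int (\<sigma> a) - int a"

definition validp :: "nat list \<Rightarrow> (nat \<Rightarrow> nat) \<Rightarrow> bool" where
  "validp l \<sigma> \<longleftrightarrow> (\<forall>a<length l. nu l \<sigma> a \<ge> 0)"

definition Psig :: "nat list \<Rightarrow> (nat \<Rightarrow> nat) \<Rightarrow> nat set" where
  "Psig l \<sigma> = {a. a < length l \<and> nu l \<sigma> a > 0}"

definition Msig :: "nat list \<Rightarrow> (nat \<Rightarrow> nat) \<Rightarrow> nat multiset" where
  "Msig l \<sigma> = image_mset (\<lambda>a. nat (nu l \<sigma> a)) (mset_set (Psig l \<sigma>))"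

lemma esym_neg: "m < 0 \<Longrightarrow> esym m = 0"
  by (simp add: esym_def)

lemma prod_esym_nu:
  "(\<Prod>a<length l. esym (nu l \<sigma> a)) = (if validp l \<sigma> then EM (Msig l \<sigma>) else 0)"
proof (cases "validp l \<sigma>")
  case False
  then obtain a where a: "a < length l" "nu l \<sigma> a < 0" by (auto simp: validp_def not_le)
  have "(\<Prod>a<length l. esym (nu l \<sigma> a)) = 0"
    using a by (metis esym_neg finite_lessThan lessThan_iff prod_zero_iff)
  with False show ?thesis by simp
next
  case True
  have fin: "finite (Psig l \<sigma>)" by (simp add: Psig_def)
  have "(\<Prod>a<length l. esym (nu l \<sigma> a)) = (\<Prod>a\<in>Psig l \<sigma>. esym (nu l \<sigma> a))"
  proof (rule prod.mono_neutral_right)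
    show "\<forall>i\<in>{..<length l} - Psig l \<sigma>. esym (nu l \<sigma> i) = 1"
    proof
      fix i assume "i \<in> {..<length l} - Psig l \<sigma>"
      then have "nu l \<sigma> i = 0" using True by (auto simp: Psig_def validp_def)
      then show "esym (nu l \<sigma> i) = 1" by (simp add: esym_0)
    qed
  qed (auto simp: Psig_def)
  also have "\<dots> = (\<Prod>a\<in>Psig l \<sigma>. esym (int (nat (nu l \<sigma> a))))"
    by (rule prod.cong) (auto simp: Psig_def)
  also have "\<dots> = EM (Msig l \<sigma>)"
    unfolding EM_def Msig_def prod_unfold_prod_mset image_mset.compositionality
    by (simp add: comp_def)
  finally show ?thesis using True by simp
qed

lemma schur_expand:
  "schur l = (\<Sum>\<sigma> | \<sigma> permutes {..<length l}. cconst (of_int (sign \<sigma>)) *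
      (if validp l \<sigma> then EM (Msig l \<sigma>) else 0))"
proof -
  have oi: "(of_int i :: epoly) = cconst (of_int i)" for i
    by (simp add: cconst_def)
  show ?thesis
    unfolding schur_def detm_def oi
    by (rule sum.cong[OF refl]) (simp add: nu_def[symmetric] prod_esym_nu)
qed

lemma Msig_pos: "Msig l \<sigma> \<in> Pos"
  by (auto simp: Msig_def Pos_def Psig_def)

lemma partition_nth_pos: "is_partition l \<Longrightarrow> a < length l \<Longrightarrow> l ! a > 0"
  by (simp add: is_partition_def)

lemma partition_mono: "is_partition l \<Longrightarrow> i \<le> j \<Longrightarrow> j < length l \<Longrightarrow> l ! j \<le> l ! i"
  unfolding is_partition_def
  by (metis le_neq_implies_less order_refl sorted_wrt_nth_less)

lemma mset_nth: "mset l = image_mset (nth l) (mset_set {..<length l})"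
proof -
  have "mset l = mset (map (nth l) [0..<length l])" by (simp add: map_nth)
  also have "\<dots> = image_mset (nth l) (mset_set {..<length l})"
    by (simp add: atLeast0LessThan)
  finally show ?thesis .
qed

lemma Msig_id:
  assumes "is_partition l"
  shows "validp l id" "Msig l id = mset l"
proof -
  have nu: "a < length l \<Longrightarrow> nu l id a = int (l ! a)" for a by (simp add: nu_def)
  show "validp l id" by (simp add: validp_def nu)
  have P: "Psig l id = {..<length l}"
    using partition_nth_pos[OF assms] by (auto simp: Psig_def nu)
  show "Msig l id = mset l"
    unfolding Msig_def P mset_nth
    by (rule image_mset_cong) (simp add: nu)
qed

lemma Msig_gt:
  assumes l: "is_partition l" and p: "\<sigma> permutes {..<length l}" and ne: "\<sigma> \<noteq> id"
  shows "mset l < Msig l \<sigma>"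
proof -
  let ?k = "length l"
  have ex: "\<exists>a. \<sigma> a \<noteq> a" using ne by auto
  define a0 where "a0 = (LEAST a. \<sigma> a \<noteq> a)"
  have a0: "\<sigma> a0 \<noteq> a0" unfolding a0_def by (rule LeastI_ex[OF ex])
  have fix0: "a < a0 \<Longrightarrow> \<sigma> a = a" for a unfolding a0_def using not_less_Least by blast
  have a0k: "a0 < ?k" using a0 permutes_not_in[OF p] by fastforce
  have inj: "inj \<sigma>" using p permutes_inj by blast
  have gt: "\<sigma> a0 > a0"
  proof (rule ccontr)
    assume "\<not> a0 < \<sigma> a0"
    then have "\<sigma> a0 < a0" using a0 by simp
    then have "\<sigma> (\<sigma> a0) = \<sigma> a0" using fix0 by blast
    then show False using inj a0 by (metis injD)
  qed
  have nua0: "nu l \<sigma> a0 > int (l ! a0)" using gt by (simp add: nu_def)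
  have nulow: "a < a0 \<Longrightarrow> nu l \<sigma> a = int (l ! a)" for a using fix0 by (simp add: nu_def)
  have U: "{..<?k} = {..<a0} \<union> {a0..<?k}" using a0k by auto
  have D: "{..<a0} \<inter> {a0..<?k} = {}" by auto
  define A where "A = image_mset (nth l) (mset_set {..<a0})"
  define L' where "L' = image_mset (nth l) (mset_set {a0..<?k})"
  define M' where "M' = image_mset (\<lambda>a. nat (nu l \<sigma> a)) (mset_set (Psig l \<sigma> \<inter> {a0..<?k}))"
  have ml: "mset l = A + L'"
    unfolding mset_nth A_def L'_def U by (simp add: mset_set_Union[OF _ _ D])
  have PU: "Psig l \<sigma> = {..<a0} \<union> (Psig l \<sigma> \<inter> {a0..<?k})"
    using a0k partition_nth_pos[OF l] nulow by (auto simp: Psig_def)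
  have D2: "{..<a0} \<inter> (Psig l \<sigma> \<inter> {a0..<?k}) = {}" by auto
  have mA: "image_mset (\<lambda>a. nat (nu l \<sigma> a)) (mset_set {..<a0}) = A"
    unfolding A_def by (rule image_mset_cong) (simp add: nulow)
  have ms: "Msig l \<sigma> = A + M'"
    unfolding Msig_def M'_def
    by (subst PU) (simp add: mset_set_Union[OF _ _ D2] mA)
  have "L' < M'"
  proof (rule ex_gt_imp_less_multiset)
    have "a0 \<in> Psig l \<sigma> \<inter> {a0..<?k}" using a0k nua0 by (simp add: Psig_def)
    then have "nat (nu l \<sigma> a0) \<in># M'" unfolding M'_def by auto
    moreover have "\<forall>x. x \<in># L' \<longrightarrow> x < nat (nu l \<sigma> a0)"
    proof (intro allI impI)
      fix x assume "x \<in># L'"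
      then obtain a where "a \<in> {a0..<?k}" "x = l ! a" unfolding L'_def by auto
      then have "x \<le> l ! a0" using partition_mono[OF l] by auto
      then show "x < nat (nu l \<sigma> a0)" using nua0 by linarith
    qed
    ultimately show "\<exists>y. y \<in># M' \<and> (\<forall>x. x \<in># L' \<longrightarrow> x < y)" by blast
  qed
  then show ?thesis unfolding ml ms by simp
qed

lemma Msig_sum:
  assumes p: "\<sigma> permutes {..<length l}" and v: "validp l \<sigma>"
  shows "sum_mset (Msig l \<sigma>) = sum_mset (mset l)"
proof -
  let ?k = "length l"
  have "sum_mset (Msig l \<sigma>) = (\<Sum>a\<in>Psig l \<sigma>. nat (nu l \<sigma> a))"
    unfolding Msig_def by (simp add: sum_unfold_sum_mset)
  also have "\<dots> = (\<Sum>a<?k. nat (nu l \<sigma> a))"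
    by (rule sum.mono_neutral_left) (use v in \<open>auto simp: Psig_def validp_def\<close>)
  finally have s1: "int (sum_mset (Msig l \<sigma>)) = (\<Sum>a<?k. nu l \<sigma> a)"
    using v by (simp add: validp_def)
  have "(\<Sum>a<?k. int (\<sigma> a)) = (\<Sum>a<?k. int a)"
    using sum.permute[OF p, of int] by (simp add: comp_def)
  then have "(\<Sum>a<?k. nu l \<sigma> a) = (\<Sum>a<?k. int (l ! a))"
    by (simp add: nu_def sum.distrib sum_subtractf)
  also have "\<dots> = int (\<Sum>a<?k. l ! a)" by simp
  also have "(\<Sum>a<?k. l ! a) = sum_mset (mset l)"
    by (simp add: sum_mset_sum_list sum_list_sum_nth atLeast0LessThan)
  finally have "int (sum_mset (Msig l \<sigma>)) = int (sum_mset (mset l))" by (rule trans[OF s1])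
  then show ?thesis by (rule of_nat_eq_iff[THEN iffD1])
qed


definition Part :: "nat list set" where "Part = {l. is_partition l}"

lemma partition_inj:
  assumes "is_partition l" "is_partition l'" "mset l = mset l'"
  shows "l = l'"
proof -
  have s: "sorted (rev l)" "sorted (rev l')"
    using assms(1,2) by (simp_all add: is_partition_def sorted_wrt_rev)
  have "sort (rev l') = rev l"
    by (rule properties_for_sort) (use assms(3) s in simp_all)
  then have "rev l = rev l'" using s(2) by (simp add: sorted_sort_id)
  then show ?thesis by simp
qed

lemma partition_of_mset:
  assumes "M \<in> Pos"
  shows "is_partition (rev (sorted_list_of_multiset M))" "mset (rev (sorted_list_of_multiset M)) = M"
proof -
  show "mset (rev (sorted_list_of_multiset M)) = M" by simp
  have "sorted_wrt (\<ge>) (rev (sorted_list_of_multiset M))"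
    by (simp add: sorted_wrt_rev)
  moreover have "\<forall>x\<in>set (rev (sorted_list_of_multiset M)). x > 0"
    using assms by (auto simp: Pos_def intro: gr0I)
  ultimately show "is_partition (rev (sorted_list_of_multiset M))"
    by (simp add: is_partition_def)
qed

definition CN :: "nat \<Rightarrow> nat multiset set" where
  "CN N = {M \<in> Pos. sum_mset M = N}"

lemma size_le_sum_pos: "M \<in> Pos \<Longrightarrow> size M \<le> sum_mset M"
  by (induction M) (auto simp: Pos_def)

lemma elem_le_sum: "x \<in># (M :: nat multiset) \<Longrightarrow> x \<le> sum_mset M"
  by (induction M) auto

lemma CN_finite: "finite (CN N)"
proof -
  have "CN N \<subseteq> (\<Union>n\<in>{..N}. multisets_of_size {..N} n)"
  proof
    fix M assume "M \<in> CN N"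
    then have "M \<in> Pos" "sum_mset M = N" by (auto simp: CN_def)
    then have "size M \<le> N" "set_mset M \<subseteq> {..N}"
      using size_le_sum_pos elem_le_sum by auto
    then show "M \<in> (\<Union>n\<in>{..N}. multisets_of_size {..N} n)"
      by (intro UN_I[of "size M"]) (auto simp: multisets_of_size_def)
  qed
  moreover have "finite (\<Union>n\<in>{..N}. multisets_of_size {..N} n)" by auto
  ultimately show ?thesis by (rule finite_subset)
qed

lemma perms_finite: "finite {\<sigma>. \<sigma> permutes {..<(k::nat)}}"
  using finite_permutations[of "{..<k}"] by simp

lemma EM_span: "M \<in> Pos \<Longrightarrow> inspan Part schur (EM M)"
proof (induction "card {M' \<in> CN (sum_mset M). M < M'}" arbitrary: M rule: less_induct)
  case less
  define l where "l = rev (sorted_list_of_multiset M)"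
  have lp: "is_partition l" and ml: "mset l = M"
    using partition_of_mset[OF less.prems] by (simp_all add: l_def)
  let ?P = "{\<sigma>. \<sigma> permutes {..<length l}}"
  let ?T = "\<lambda>\<sigma>. cconst (of_int (sign \<sigma>)) * (if validp l \<sigma> then EM (Msig l \<sigma>) else 0)"
  have idP: "id \<in> ?P" by (simp add: permutes_id)
  have s1: "schur l = ?T id + (\<Sum>\<sigma>\<in>?P - {id}. ?T \<sigma>)"
    unfolding schur_expand by (rule sum.remove[OF perms_finite idP])
  have s2: "?T id = EM M" using Msig_id[OF lp] ml by (simp add: sign_id)
  have eq: "EM M = schur l - (\<Sum>\<sigma>\<in>?P - {id}. ?T \<sigma>)"
    using s1 unfolding s2 by (simp add: algebra_simps)
  have "inspan Part schur (?T \<sigma>)" if s: "\<sigma> \<in> ?P - {id}" for \<sigma>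
  proof (cases "validp l \<sigma>")
    case True
    let ?M = "Msig l \<sigma>"
    have sp: "\<sigma> permutes {..<length l}" "\<sigma> \<noteq> id" using s by auto
    have gt: "M < ?M" using Msig_gt[OF lp sp] ml by simp
    have sum: "sum_mset ?M = sum_mset M" using Msig_sum[OF sp(1) True] ml by simp
    have pos: "?M \<in> Pos" by (rule Msig_pos)
    have sub: "{M' \<in> CN (sum_mset ?M). ?M < M'} \<subset> {M' \<in> CN (sum_mset M). M < M'}"
    proof
      show "{M' \<in> CN (sum_mset ?M). ?M < M'} \<subseteq> {M' \<in> CN (sum_mset M). M < M'}"
      proof (rule subsetI)
        fix M' assume "M' \<in> {M' \<in> CN (sum_mset ?M). ?M < M'}"
        then have "M' \<in> CN (sum_mset M)" "?M < M'" using sum by simp_all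
        moreover have "M < M'" using gt \<open>?M < M'\<close> by (rule less_trans)
        ultimately show "M' \<in> {M' \<in> CN (sum_mset M). M < M'}" by simp
      qed
      have "?M \<in> {M' \<in> CN (sum_mset M). M < M'}" using gt sum pos by (simp add: CN_def)
      moreover have "?M \<notin> {M' \<in> CN (sum_mset ?M). ?M < M'}" by simp
      ultimately show "{M' \<in> CN (sum_mset ?M). ?M < M'} \<noteq> {M' \<in> CN (sum_mset M). M < M'}" by blast
    qed
    have "card {M' \<in> CN (sum_mset ?M). ?M < M'} < card {M' \<in> CN (sum_mset M). M < M'}"
      by (rule psubset_card_mono[OF _ sub]) (simp add: CN_finite)
    then have "inspan Part schur (EM ?M)" by (rule less.hyps[OF _ pos])
    then show ?thesis using True by (simp add: inspan_cmult)
  next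
    case False
    then show ?thesis by (simp add: inspan_0)
  qed
  then have "inspan Part schur (\<Sum>\<sigma>\<in>?P - {id}. ?T \<sigma>)"
    by (intro inspan_sum) (simp_all add: perms_finite)
  moreover have "inspan Part schur (schur l)" using lp by (intro inspan_gen) (simp add: Part_def)
  ultimately show ?case using eq by (simp add: inspan_diff)
qed

lemma wf_span_schur:
  assumes "\<forall>e\<in>Poly_Mapping.keys f. \<forall>v\<in>Poly_Mapping.keys e. 1 \<le> v"
  shows "inspan Part schur f"
  by (rule inspan_trans[OF wf_span_E[OF assms] EM_span])

lemma schur_indep:
  assumes fin: "finite {l. a l \<noteq> 0}" and part: "\<forall>l. a l \<noteq> 0 \<longrightarrow> is_partition l"
    and z: "Sum_any (\<lambda>l. cconst (a l) * schur l) = 0"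
  shows "a l = 0"
proof (rule ccontr)
  assume al: "a l \<noteq> 0"
  define F where "F = {l. a l \<noteq> 0}"
  have lF: "l \<in> F" using al by (simp add: F_def)
  have Ffin: "finite F" using fin by (simp add: F_def)
  define m0 where "m0 = Min (mset ` F)"
  have "m0 \<in> mset ` F" unfolding m0_def using Ffin lF by (intro Min_in) auto
  then obtain l0 where l0: "l0 \<in> F" "mset l0 = m0" by auto
  have minl: "\<And>l'. l' \<in> F \<Longrightarrow> mset l0 \<le> mset l'"
    using Ffin l0 unfolding m0_def by auto
  define Pl where "Pl (l::nat list) = {\<sigma>. \<sigma> permutes {..<length l}}" for l
  define I where "I = Sigma F Pl"
  have Ifin: "finite I" unfolding I_def Pl_def using Ffin perms_finite by auto
  define c where "c = (\<lambda>(l, \<sigma>). a l * of_int (sign \<sigma>) * (if validp l \<sigma> then 1 else 0))"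
  define Mi where "Mi = (\<lambda>(l, \<sigma>). Msig l \<sigma>)"
  have "0 = (\<Sum>l\<in>F. cconst (a l) * schur l)"
  proof -
    have "Sum_any (\<lambda>l. cconst (a l) * schur l) = (\<Sum>l\<in>F. cconst (a l) * schur l)"
      by (rule Sum_any_cconst_finite) (use fin in \<open>auto simp: F_def\<close>)
    then show ?thesis using z by simp
  qed
  also have "\<dots> = (\<Sum>l\<in>F. \<Sum>\<sigma>\<in>Pl l. cconst (c (l, \<sigma>)) * EM (Mi (l, \<sigma>)))"
    unfolding schur_expand Pl_def
    by (simp add: sum_distrib_left c_def Mi_def)
      (intro sum.cong refl, simp add: cconst_mult)
  also have "\<dots> = (\<Sum>i\<in>I. cconst (c i) * EM (Mi i))"
  proof -
    have PP: "Pl = (\<lambda>l. {\<sigma>. \<sigma> permutes {..<length l}})" by (simp add: Pl_def fun_eq_iff)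
    show ?thesis
      unfolding I_def using sum.Sigma[of F Pl "\<lambda>l \<sigma>. cconst (c (l, \<sigma>)) * EM (Mi (l, \<sigma>))"] Ffin
      by (simp add: PP perms_finite split_beta)
  qed
  finally have zz: "(\<Sum>i\<in>I. cconst (c i) * EM (Mi i)) = 0" by simp
  have E: "(\<Sum>i\<in>{i\<in>I. Mi i = mset l0}. c i) = 0"
    by (rule E_indep[OF Ifin _ zz]) (auto simp: Mi_def Msig_pos)
  have l0p: "is_partition l0" using l0(1) part by (simp add: F_def)
  have i0: "(l0, id) \<in> {i\<in>I. Mi i = mset l0}"
    using l0 Msig_id[OF l0p] by (simp add: I_def Pl_def Mi_def permutes_id)
  have rest: "c i = 0" if i: "i \<in> {i\<in>I. Mi i = mset l0} - {(l0, id)}" for i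
  proof (rule ccontr)
    assume ci: "c i \<noteq> 0"
    obtain l' \<sigma> where i': "i = (l', \<sigma>)" by fastforce
    have v: "validp l' \<sigma>" using ci by (simp add: c_def i' split: if_splits)
    have l'F: "l' \<in> F" and p: "\<sigma> permutes {..<length l'}" and m: "Msig l' \<sigma> = mset l0"
      using i by (auto simp: i' I_def Pl_def Mi_def)
    have l'p: "is_partition l'" using l'F part by (simp add: F_def)
    show False
    proof (cases "\<sigma> = id")
      case True
      then have "mset l' = mset l0" using Msig_id[OF l'p] m by simp
      then have "l' = l0" using partition_inj[OF l'p l0p] by simp
      then show False using i True by (simp add: i')
    next
      case False
      then have "mset l' < mset l0" using Msig_gt[OF l'p p] m by simp
      then show False using minl[OF l'F] by simp
    qed
  qed
  have "(\<Sum>i\<in>{i\<in>I. Mi i = mset l0}. c i) = c (l0, id)"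
    by (subst sum.remove[OF _ i0]) (use Ifin rest in \<open>auto intro!: sum.neutral\<close>)
  also have "\<dots> = a l0" using Msig_id[OF l0p] by (simp add: c_def sign_id)
  finally show False using E l0(1) by (simp add: F_def)
qed


lemma Sum_any_slice:
  fixes g :: "'a \<Rightarrow> 'c::comm_monoid_add"
  shows "Sum_any (\<lambda>(l, J). if J = S then g l else 0) = Sum_any g"
proof -
  let ?h = "\<lambda>(l, J). if J = S then g l else 0"
  let ?f = "\<lambda>l. (l, S)"
  have supp: "{x. ?h x \<noteq> 0} = ?f ` {l. g l \<noteq> 0}"
  proof (intro set_eqI iffI)
    fix x assume "x \<in> {x. ?h x \<noteq> 0}"
    moreover obtain l J where "x = (l, J)" by fastforce
    ultimately show "x \<in> ?f ` {l. g l \<noteq> 0}" by (auto split: if_splits)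
  qed auto
  have inj: "inj_on ?f {l. g l \<noteq> 0}" by (auto simp: inj_on_def)
  have fin: "finite {x. ?h x \<noteq> 0} \<longleftrightarrow> finite {l. g l \<noteq> 0}"
    unfolding supp using finite_image_iff[OF inj] .
  show ?thesis
  proof (cases "finite {l. g l \<noteq> 0}")
    case True
    have "Sum_any ?h = sum ?h (?f ` {l. g l \<noteq> 0})"
      unfolding Sum_any.expand_set supp ..
    also have "\<dots> = sum g {l. g l \<noteq> 0}"
      by (subst sum.reindex[OF inj]) simp
    finally show ?thesis by (simp add: Sum_any.expand_set)
  next
    case False
    then show ?thesis using fin by simp
  qed
qed

lemma slice_finite:
  "finite {(l, J). a l J \<noteq> 0} \<Longrightarrow> finite {l. a l S \<noteq> 0}"
proof -
  assume f: "finite {(l, J). a l J \<noteq> 0}"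
  have "{l. a l S \<noteq> 0} \<subseteq> fst ` {(l, J). a l J \<noteq> 0}" by force
  then show ?thesis using f by (rule finite_subset[OF _ finite_imageI])
qed

lemma expansion_sum:
  assumes supp: "\<forall>l J. a l J \<noteq> 0 \<longrightarrow> is_partition l \<and> finite J"
  shows "Sum_any (\<lambda>(l, J). scal (a l J) (schur_q l J) S) = Sum_any (\<lambda>l. cconst (a l S) * schur l)"
proof -
  have "Sum_any (\<lambda>(l, J). scal (a l J) (schur_q l J) S)
      = Sum_any (\<lambda>(l, J). if J = S then cconst (a l S) * schur l else 0)"
  proof (rule Sum_any.cong)
    fix x :: "nat list \<times> nat set"
    obtain l J where x: "x = (l, J)" by fastforce
    show "(case x of (l, J) \<Rightarrow> scal (a l J) (schur_q l J) S) =
          (case x of (l, J) \<Rightarrow> if J = S then cconst (a l S) * schur l else 0)"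
    proof (cases "a l J = 0")
      case True
      then show ?thesis by (auto simp: x scal_def)
    next
      case False
      then have "finite J" using supp by blast
      then show ?thesis by (auto simp: x scal_def schur_q_def oddprod_finite)
    qed
  qed
  also have "\<dots> = Sum_any (\<lambda>l. cconst (a l S) * schur l)" by (rule Sum_any_slice)
  finally show ?thesis .
qed

lemma expansion_sum_F:
  assumes supp: "\<forall>l J. a l J \<noteq> 0 \<longrightarrow> is_partition l \<and> finite J"
  shows "Sum_any (\<lambda>(l, J). scal (a l J) (class_F l J) S)
     = Sum_any (\<lambda>l. cconst (a l S) * (koschorke l * cconst (cS S)))"
proof -
  have "Sum_any (\<lambda>(l, J). scal (a l J) (class_F l J) S)
      = Sum_any (\<lambda>(l, J). if J = S then cconst (a l S) * (koschorke l * cconst (cS S)) else 0)"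
  proof (rule Sum_any.cong)
    fix x :: "nat list \<times> nat set"
    obtain l J where x: "x = (l, J)" by fastforce
    show "(case x of (l, J) \<Rightarrow> scal (a l J) (class_F l J) S) =
          (case x of (l, J) \<Rightarrow> if J = S then cconst (a l S) * (koschorke l * cconst (cS S)) else 0)"
    proof (cases "a l J = 0")
      case True
      then show ?thesis by (auto simp: x scal_def)
    next
      case False
      then have "finite J" using supp by blast
      then show ?thesis by (auto simp: x scal_def class_F_def oddprod_finite cS_def)
    qed
  qed
  also have "\<dots> = Sum_any (\<lambda>l. cconst (a l S) * (koschorke l * cconst (cS S)))" by (rule Sum_any_slice)
  finally show ?thesis .
qed

lemma se_iff:
  "schur_expansion a P \<longleftrightarrow> finite {(l, J). a l J \<noteq> 0}
     \<and> (\<forall>l J. a l J \<noteq> 0 \<longrightarrow> is_partition l \<and> finite J)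
     \<and> (\<forall>S. P S = Sum_any (\<lambda>l. cconst (a l S) * schur l))"
proof -
  have "(\<forall>l J. a l J \<noteq> 0 \<longrightarrow> is_partition l \<and> finite J) \<Longrightarrow>
     (P = (\<lambda>S. Sum_any (\<lambda>(l, J). scal (a l J) (schur_q l J) S))) \<longleftrightarrow>
     (\<forall>S. P S = Sum_any (\<lambda>l. cconst (a l S) * schur l))"
    by (simp add: expansion_sum fun_eq_iff)
  then show ?thesis unfolding schur_expansion_def by blast
qed

lemma Sum_any_diff_cconst:
  assumes "finite {l. a l \<noteq> 0}" "finite {l. b l \<noteq> 0}"
  shows "Sum_any (\<lambda>l. cconst (a l) * B l) - Sum_any (\<lambda>l. cconst (b l) * B l)
       = Sum_any (\<lambda>l. cconst (a l - b l) * B l)"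
proof -
  let ?F = "{l. a l \<noteq> 0} \<union> {l. b l \<noteq> 0}"
  have fin: "finite ?F" using assms by simp
  have fab: "finite {l. a l - b l \<noteq> 0}" by (rule finite_subset[OF _ fin]) auto
  show ?thesis
  proof -
    have "Sum_any (\<lambda>l. cconst (a l) * B l) - Sum_any (\<lambda>l. cconst (b l) * B l)
       = (\<Sum>l\<in>?F. cconst (a l) * B l) - (\<Sum>l\<in>?F. cconst (b l) * B l)"
      using assms fin by (simp add: Sum_any_cconst_finite[of _ ?F])
    also have "\<dots> = (\<Sum>l\<in>?F. cconst (a l - b l) * B l)"
      by (simp add: sum_subtractf[symmetric] cconst_diff left_diff_distrib)
    also have "\<dots> = Sum_any (\<lambda>l. cconst (a l - b l) * B l)"
      using fin fab by (intro Sum_any_cconst_finite[symmetric]) auto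
    finally show ?thesis .
  qed
qed

theorem main_result:
  fixes P :: spoly
  assumes wf: "wf_spoly P"
    and ns: "NS_singular aR bR P"
  shows "(\<exists>!a. schur_expansion a P)
    \<and> (\<forall>a. schur_expansion a P \<longrightarrow>
          Phi P = (\<lambda>S. Sum_any (\<lambda>(l, J). scal (a l J) (class_F l J) S)))
    \<and> NS_singular aF bF (Phi P)"
proof (intro conjI)
  show "NS_singular aF bF (Phi P)" by (rule NS_Phi[OF wf_fs[OF wf] ns])
next
  show "\<forall>a. schur_expansion a P \<longrightarrow> Phi P = (\<lambda>S. Sum_any (\<lambda>(l, J). scal (a l J) (class_F l J) S))"
  proof (intro allI impI ext)
    fix a S assume "schur_expansion a P"
    then have fin: "finite {(l, J). a l J \<noteq> 0}" and supp: "\<forall>l J. a l J \<noteq> 0 \<longrightarrow> is_partition l \<and> finite J"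
      and PS: "P S = Sum_any (\<lambda>l. cconst (a l S) * schur l)"
      unfolding se_iff by blast+
    have "Phi P S = cconst (cS S) * Phi_even (Sum_any (\<lambda>l. cconst (a l S) * schur l))"
      by (simp add: Phi_apply PS)
    also have "\<dots> = Sum_any (\<lambda>l. cconst (cS S) * Phi_even (cconst (a l S) * schur l))"
      by (rule Phi_Sum_any)
    also have "\<dots> = Sum_any (\<lambda>l. cconst (a l S) * (koschorke l * cconst (cS S)))"
      by (simp only: Phi_even_cmult Phi_even_schur) (simp only: mult_ac)
    also have "\<dots> = Sum_any (\<lambda>(l, J). scal (a l J) (class_F l J) S)"
      by (rule expansion_sum_F[OF supp, symmetric])
    finally show "Phi P S = Sum_any (\<lambda>(l, J). scal (a l J) (class_F l J) S)" .
  qed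
next
  define good where "good f b \<longleftrightarrow> finite {l. b l \<noteq> 0} \<and> (\<forall>l. b l \<noteq> 0 \<longrightarrow> is_partition l)
      \<and> f = Sum_any (\<lambda>l. cconst (b l) * schur l)" for f b
  have ex: "\<exists>b. good (P S) b" if "P S \<noteq> 0" for S
  proof -
    have "\<forall>e\<in>Poly_Mapping.keys (P S). \<forall>v\<in>Poly_Mapping.keys e. 1 \<le> v"
      using wf unfolding wf_spoly_def by (metis in_keys_iff less_one not_le)
    then have "inspan Part schur (P S)" by (rule wf_span_schur)
    then show ?thesis unfolding inspan_def good_def Part_def by auto
  qed
  define b where "b S = (SOME b. good (P S) b)" for S
  have bgood: "good (P S) (b S)" if "P S \<noteq> 0" for S
    unfolding b_def using someI_ex[OF ex[OF that]] .
  define a where "a l J = (if P J = 0 then 0 else b J l)" for l J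
  have "schur_expansion a P"
    unfolding se_iff
  proof (intro conjI allI impI)
    have fP: "finite {J. P J \<noteq> 0}" using wf by (simp add: wf_spoly_def)
    have "{(l, J). a l J \<noteq> 0} \<subseteq> (\<Union>J\<in>{J. P J \<noteq> 0}. {l. b J l \<noteq> 0} \<times> {J})"
      by (auto simp: a_def split: if_splits)
    moreover have "finite (\<Union>J\<in>{J. P J \<noteq> 0}. {l. b J l \<noteq> 0} \<times> {J})"
      using fP bgood by (auto simp: good_def)
    ultimately show "finite {(l, J). a l J \<noteq> 0}" by (rule finite_subset)
  next
    fix l J assume "a l J \<noteq> 0"
    then have PJ: "P J \<noteq> 0" and bl: "b J l \<noteq> 0" by (auto simp: a_def split: if_splits)
    show "is_partition l" using bgood[OF PJ] bl by (simp add: good_def)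
    show "finite J" using wf PJ by (simp add: wf_spoly_def)
  next
    fix S
    show "P S = Sum_any (\<lambda>l. cconst (a l S) * schur l)"
    proof (cases "P S = 0")
      case True
      then show ?thesis by (simp add: a_def)
    next
      case False
      then show ?thesis using bgood[OF False] by (simp add: a_def good_def)
    qed
  qed
  moreover have "a1 = a2" if h1: "schur_expansion a1 P" and h2: "schur_expansion a2 P" for a1 a2
  proof (intro ext)
    fix l J
    have f1: "finite {(l, J). a1 l J \<noteq> 0}" and s1: "\<forall>l J. a1 l J \<noteq> 0 \<longrightarrow> is_partition l \<and> finite J"
      and e1: "P J = Sum_any (\<lambda>l. cconst (a1 l J) * schur l)"
      using h1 unfolding se_iff by blast+
    have f2: "finite {(l, J). a2 l J \<noteq> 0}" and s2: "\<forall>l J. a2 l J \<noteq> 0 \<longrightarrow> is_partition l \<and> finite J"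
      and e2: "P J = Sum_any (\<lambda>l. cconst (a2 l J) * schur l)"
      using h2 unfolding se_iff by blast+
    have g1: "finite {l. a1 l J \<noteq> 0}" by (rule slice_finite[OF f1])
    have g2: "finite {l. a2 l J \<noteq> 0}" by (rule slice_finite[OF f2])
    have z: "Sum_any (\<lambda>l. cconst (a1 l J - a2 l J) * schur l) = 0"
      using e1 e2 Sum_any_diff_cconst[OF g1 g2, of schur] by simp
    have "a1 l J - a2 l J = 0"
    proof (rule schur_indep[OF _ _ z])
      show "finite {l. a1 l J - a2 l J \<noteq> 0}"
        by (rule finite_subset[OF _ finite_UnI[OF g1 g2]]) auto
      show "\<forall>l. a1 l J - a2 l J \<noteq> 0 \<longrightarrow> is_partition l"
        using s1 s2 by (metis diff_self)
    qed
    then show "a1 l J = a2 l J" by simp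
  qed
  ultimately show "\<exists>!a. schur_expansion a P" by blast
qed


theorem theorem5p16:
  fixes P :: spoly
  assumes "wf_spoly P"
    and "NS_singular aR bR P"
  shows "(\<exists>!a. schur_expansion a P)
    \<and> (\<forall>a. schur_expansion a P \<longrightarrow>
          Phi P = (\<lambda>S. Sum_any (\<lambda>(l, J). scal (a l J) (class_F l J) S)))
    \<and> NS_singular aF bF (Phi P)"
  using assms by (rule main_result)

end
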